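(* Let $\rho$ be an $N$-qubit density matrix. Let $O_1,\dots,O_L$ be Hermitian $N$-qubit observables, where each $O_l$ is localized to a subset $\mathsf K_l\subseteq\{1,\dots,N\}$ with $|\mathsf K_l|\le K$, i.e. $O_l=O_{l,\mathsf K_l}\otimes\mathbb I_{\neg\mathsf K_l}$, and assume $\mathrm{tr}(O_{l,\mathsf K_l}^2)\ge (5/9)^{|\mathsf K_l|}$ for all $l$. Fix $\epsilon,\delta\in(0,1)$. Let $\hat\sigma_1,\dots,\hat\sigma_M$ be independent SIC POVM classical shadows of $\rho$ (each from an independent copy of $\rho$) with $$M\ge \tfrac{8}{3}\,3^K\max_{1\le l\le L}\mathrm{tr}(O_{l,\mathsf K_l}^2)\,\log(2L/\delta)/\epsilon^2 .$$ Then with probability at least $1-\delta$, $$\max_{1\le l\le L}\Big|\frac1M\sum_{m=1}^M\mathrm{tr}(O_l\hat\sigma_m)-\mathrm{tr}(O_l\rho)\Big|\le\epsilon .$$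
   Context: Let $|\psi_1\rangle,\dots,|\psi_4\rangle\in\mathbb C^2$ be unit vectors forming a single-qubit SIC set, i.e. $|\langle\psi_i|\psi_j\rangle|^2=1/3$ for all $i\neq j$; then $\{\tfrac12|\psi_i\rangle\langle\psi_i|\}_{i=1}^4$ is a POVM. Performing this measurement on each qubit of an $N$-qubit state $\rho$ yields an outcome string $(i_1,\dots,i_N)\in\{1,2,3,4\}^N$ with probability $\Pr[i_1\cdots i_N\mid\rho]=2^{-N}\langle\psi_{i_1}\otimes\cdots\otimes\psi_{i_N}|\,\rho\,|\psi_{i_1}\otimes\cdots\otimes\psi_{i_N}\rangle$. The SIC POVM classical shadow associated with this outcome is $\hat\sigma=\bigotimes_{n=1}^N\big(3|\psi_{i_n}\rangle\langle\psi_{i_n}|-\mathbb I\big)$. $\log$ is the natural logarithm. *)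

theory Defs
  imports "HOL-Analysis.Analysis"
begin

text \<open>N-qubit operators are represented as complex matrices indexed by computational
basis labels.  A basis label for the qubits in a set S of qubit positions is an
extensional function S \<rightarrow>E bool (value undefined outside S).  The whole register
is S = {0..<N}; a local operator on qubits K is indexed by basis labels of K.\<close>

type_synonym qop = "(nat \<Rightarrow> bool) \<Rightarrow> (nat \<Rightarrow> bool) \<Rightarrow> complex"

definition qbasis :: "nat set \<Rightarrow> (nat \<Rightarrow> bool) set" where
  "qbasis S = S \<rightarrow>\<^sub>E (UNIV :: bool set)"

definition qtrace :: "nat set \<Rightarrow> qop \<Rightarrow> complex" where
  "qtrace S A = (\<Sum>x\<in>qbasis S. A x x)"

definition qmult :: "nat set \<Rightarrow> qop \<Rightarrow> qop \<Rightarrow> qop" where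
  "qmult S A B = (\<lambda>x y. \<Sum>z\<in>qbasis S. A x z * B z y)"

definition hermitian_on :: "nat set \<Rightarrow> qop \<Rightarrow> bool" where
  "hermitian_on S A \<longleftrightarrow> (\<forall>x\<in>qbasis S. \<forall>y\<in>qbasis S. A x y = cnj (A y x))"

definition psd_on :: "nat set \<Rightarrow> qop \<Rightarrow> bool" where
  "psd_on S A \<longleftrightarrow> (\<forall>v :: (nat \<Rightarrow> bool) \<Rightarrow> complex.
      let q = (\<Sum>x\<in>qbasis S. \<Sum>y\<in>qbasis S. cnj (v x) * A x y * v y)
      in Im q = 0 \<and> Re q \<ge> 0)"

definition density_matrix :: "nat \<Rightarrow> qop \<Rightarrow> bool" where
  "density_matrix N \<rho> \<longleftrightarrow> hermitian_on {0..<N} \<rho> \<and> psd_on {0..<N} \<rho> \<and> qtrace {0..<N} \<rho> = 1"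

text \<open>O_K \<otimes> I on the complement of K within N qubits.\<close>
definition extend_local :: "nat \<Rightarrow> nat set \<Rightarrow> qop \<Rightarrow> qop" where
  "extend_local N K A = (\<lambda>x y. if (\<forall>i\<in>{0..<N} - K. x i = y i)
       then A (restrict x K) (restrict y K) else 0)"

text \<open>Single-qubit SIC set \<psi> 0, ..., \<psi> 3 (the paper's \<psi>_1..\<psi>_4), vectors in C^2 indexed by bool.\<close>
definition is_qubit_SIC :: "(nat \<Rightarrow> bool \<Rightarrow> complex) \<Rightarrow> bool" where
  "is_qubit_SIC \<psi> \<longleftrightarrow>
     (\<forall>i<4. (\<Sum>b\<in>UNIV. (cmod (\<psi> i b))\<^sup>2) = 1) \<and>
     (\<forall>i<4. \<forall>j<4. i \<noteq> j \<longrightarrow> (cmod (\<Sum>b\<in>UNIV. cnj (\<psi> i b) * \<psi> j b))\<^sup>2 = 1/3)"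

definition outcome_strings :: "nat \<Rightarrow> (nat \<Rightarrow> nat) set" where
  "outcome_strings N = {0..<N} \<rightarrow>\<^sub>E {0..<4}"

definition product_vec :: "(nat \<Rightarrow> bool \<Rightarrow> complex) \<Rightarrow> nat \<Rightarrow> (nat \<Rightarrow> nat) \<Rightarrow> (nat \<Rightarrow> bool) \<Rightarrow> complex" where
  "product_vec \<psi> N s = (\<lambda>x. \<Prod>n<N. \<psi> (s n) (x n))"

definition outcome_prob :: "(nat \<Rightarrow> bool \<Rightarrow> complex) \<Rightarrow> nat \<Rightarrow> qop \<Rightarrow> (nat \<Rightarrow> nat) \<Rightarrow> real" where
  "outcome_prob \<psi> N \<rho> s = Re (\<Sum>x\<in>qbasis {0..<N}. \<Sum>y\<in>qbasis {0..<N}.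
       cnj (product_vec \<psi> N s x) * \<rho> x y * product_vec \<psi> N s y) / 2 ^ N"

definition sic_shadow :: "(nat \<Rightarrow> bool \<Rightarrow> complex) \<Rightarrow> nat \<Rightarrow> (nat \<Rightarrow> nat) \<Rightarrow> qop" where
  "sic_shadow \<psi> N s = (\<lambda>x y. \<Prod>n<N.
       3 * \<psi> (s n) (x n) * cnj (\<psi> (s n) (y n)) - (if x n = y n then 1 else 0))"

text \<open>Probability of an event E about the outcome strings of M independent
shadows (outcome of copy m is \<omega> m).\<close>
definition shadows_prob :: "(nat \<Rightarrow> bool \<Rightarrow> complex) \<Rightarrow> nat \<Rightarrow> qop \<Rightarrow> nat \<Rightarrow>
    ((nat \<Rightarrow> nat \<Rightarrow> nat) \<Rightarrow> bool) \<Rightarrow> real" where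
  "shadows_prob \<psi> N \<rho> M E =
     (\<Sum>\<omega>\<in>{0..<M} \<rightarrow>\<^sub>E outcome_strings N.
        if E \<omega> then (\<Prod>m<M. outcome_prob \<psi> N \<rho> (\<omega> m)) else 0)"

end

theory Submission
  imports Defs
begin


definition dl :: "'a \<Rightarrow> 'a \<Rightarrow> complex" where "dl a b = (if a = b then 1 else 0)"

lemma sum_bool: "(\<Sum>b\<in>(UNIV::bool set). f b) = f True + f False"
  by (simp add: UNIV_bool add.commute)

lemma lessThan4: "{..<4::nat} = {0,1,2,3}" by auto

lemma sum4: "(\<Sum>i<4::nat. f i) = f 0 + f 1 + f 2 + f 3"
  by (simp add: lessThan4 add.assoc)

lemma M4:
  fixes \<psi> :: "nat \<Rightarrow> bool \<Rightarrow> complex"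
  assumes sic: "is_qubit_SIC \<psi>"
  shows "(\<Sum>i<4. \<psi> i a * cnj (\<psi> i b) * \<psi> i c * cnj (\<psi> i d))
     = 2/3 * (dl a b * dl c d + dl a d * dl c b)"
proof -
  define m where "m i a b c d = \<psi> i a * cnj (\<psi> i b) * \<psi> i c * cnj (\<psi> i d)" for i a b c d
  define G where "G i j = (\<Sum>a\<in>UNIV. \<psi> i a * cnj (\<psi> j a))" for i j
  define S where "S a b c d = (\<Sum>i<4. m i a b c d)" for a b c d
  define E where "E a b c d = (dl a b * dl c d + dl a d * dl c b :: complex)" for a b c d :: bool
  define D where "D a b c d = S a b c d - 2/3 * E a b c d" for a b c d
  have Gii: "G i i = 1" if "i < 4" for i
  proof -
    have "(\<Sum>b\<in>UNIV. (cmod (\<psi> i b))\<^sup>2) = 1" using sic that unfolding is_qubit_SIC_def by blast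
    hence "complex_of_real (\<Sum>b\<in>UNIV. (cmod (\<psi> i b))\<^sup>2) = 1" by simp
    thus ?thesis unfolding G_def by (simp only: of_real_sum complex_norm_square)
  qed
  have Gij: "G i j * cnj (G i j) = 1/3" if "i < 4" "j < 4" "i \<noteq> j" for i j
  proof -
    have "(cmod (\<Sum>b\<in>UNIV. cnj (\<psi> i b) * \<psi> j b))\<^sup>2 = 1/3" using sic that unfolding is_qubit_SIC_def by blast
    moreover have "(\<Sum>b\<in>UNIV. cnj (\<psi> i b) * \<psi> j b) = cnj (G i j)" unfolding G_def by (simp add: sum_bool)
    ultimately have "(cmod (G i j))\<^sup>2 = 1/3" by simp
    hence "complex_of_real ((cmod (G i j))\<^sup>2) = complex_of_real (1/3)" by (rule arg_cong)
    thus ?thesis by (simp only: complex_norm_square) simp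
  qed
  have GG: "G i j * cnj (G i j) = (if i = j then 1 else 1/3)" if "i < 4" "j < 4" for i j
    using Gii Gij that by auto
  have key: "(\<Sum>a\<in>UNIV. \<Sum>b\<in>UNIV. \<Sum>c\<in>UNIV. \<Sum>d\<in>UNIV. m i a b c d * cnj (m j a b c d))
      = (G i j * cnj (G i j))^2" for i j
    unfolding m_def G_def by (simp add: sum_bool algebra_simps power2_eq_square)
  have A1: "(\<Sum>a\<in>UNIV. \<Sum>b\<in>UNIV. \<Sum>c\<in>UNIV. \<Sum>d\<in>UNIV. S a b c d * cnj (S a b c d))
      = (\<Sum>i<4. \<Sum>j<4. \<Sum>a\<in>UNIV. \<Sum>b\<in>UNIV. \<Sum>c\<in>UNIV. \<Sum>d\<in>UNIV. m i a b c d * cnj (m j a b c d))"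
    unfolding S_def by (simp add: sum_bool sum_product sum.distrib)
  have A1': "(\<Sum>a\<in>UNIV. \<Sum>b\<in>UNIV. \<Sum>c\<in>UNIV. \<Sum>d\<in>UNIV. S a b c d * cnj (S a b c d)) = 16/3"
    unfolding A1 key using GG by (simp add: sum4 power2_eq_square)
  have A2i: "(\<Sum>a\<in>UNIV. \<Sum>b\<in>UNIV. \<Sum>c\<in>UNIV. \<Sum>d\<in>UNIV. E a b c d * m i a b c d) = 2 * (G i i)^2" for i
    unfolding E_def m_def G_def dl_def by (simp add: sum_bool algebra_simps power2_eq_square)
  have A2: "(\<Sum>a\<in>UNIV. \<Sum>b\<in>UNIV. \<Sum>c\<in>UNIV. \<Sum>d\<in>UNIV. E a b c d * S a b c d) = 8"
  proof -
    have "(\<Sum>a\<in>UNIV. \<Sum>b\<in>UNIV. \<Sum>c\<in>UNIV. \<Sum>d\<in>UNIV. E a b c d * S a b c d)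
      = (\<Sum>i<4. \<Sum>a\<in>UNIV. \<Sum>b\<in>UNIV. \<Sum>c\<in>UNIV. \<Sum>d\<in>UNIV. E a b c d * m i a b c d)"
      unfolding S_def by (simp add: sum_bool sum_distrib_left sum.distrib)
    also have "\<dots> = 8" unfolding A2i using Gii by (simp add: sum4)
    finally show ?thesis .
  qed
  have A3: "(\<Sum>a\<in>UNIV. \<Sum>b\<in>UNIV. \<Sum>c\<in>UNIV. \<Sum>d\<in>UNIV. E a b c d * cnj (S a b c d)) = 8"
  proof -
    have "cnj (\<Sum>a\<in>UNIV. \<Sum>b\<in>UNIV. \<Sum>c\<in>UNIV. \<Sum>d\<in>UNIV. E a b c d * S a b c d)
        = (\<Sum>a\<in>UNIV. \<Sum>b\<in>UNIV. \<Sum>c\<in>UNIV. \<Sum>d\<in>UNIV. E a b c d * cnj (S a b c d))"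
      unfolding E_def dl_def by (simp add: sum_bool)
    thus ?thesis using A2 by simp
  qed
  have A4: "(\<Sum>a\<in>UNIV. \<Sum>b\<in>UNIV. \<Sum>c\<in>UNIV. \<Sum>d\<in>UNIV. E a b c d * E a b c d) = 12"
    unfolding E_def dl_def by (simp add: sum_bool)
  have Ereal: "cnj (E a b c d) = E a b c d" for a b c d unfolding E_def dl_def by simp
  have DD: "D a b c d * cnj (D a b c d) = S a b c d * cnj (S a b c d) - 2/3 * (E a b c d * cnj (S a b c d))
      - 2/3 * (E a b c d * S a b c d) + 4/9 * (E a b c d * E a b c d)" for a b c d
    unfolding D_def using Ereal[of a b c d] by (simp add: algebra_simps)
  have tot: "(\<Sum>a\<in>UNIV. \<Sum>b\<in>UNIV. \<Sum>c\<in>UNIV. \<Sum>d\<in>UNIV. D a b c d * cnj (D a b c d)) = 0"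
  proof -
    have "(\<Sum>a\<in>UNIV. \<Sum>b\<in>UNIV. \<Sum>c\<in>UNIV. \<Sum>d\<in>UNIV. D a b c d * cnj (D a b c d))
      = (\<Sum>a\<in>UNIV. \<Sum>b\<in>UNIV. \<Sum>c\<in>UNIV. \<Sum>d\<in>UNIV. S a b c d * cnj (S a b c d))
        - 2/3 * (\<Sum>a\<in>UNIV. \<Sum>b\<in>UNIV. \<Sum>c\<in>UNIV. \<Sum>d\<in>UNIV. E a b c d * cnj (S a b c d))
        - 2/3 * (\<Sum>a\<in>UNIV. \<Sum>b\<in>UNIV. \<Sum>c\<in>UNIV. \<Sum>d\<in>UNIV. E a b c d * S a b c d)
        + 4/9 * (\<Sum>a\<in>UNIV. \<Sum>b\<in>UNIV. \<Sum>c\<in>UNIV. \<Sum>d\<in>UNIV. E a b c d * E a b c d)"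
      unfolding DD by (simp add: sum_bool algebra_simps)
    thus ?thesis using A1' A2 A3 A4 by simp
  qed
  have nn: "D a b c d * cnj (D a b c d) = complex_of_real ((cmod (D a b c d))\<^sup>2)" for a b c d
    by (simp only: complex_norm_square)
  have "(\<Sum>a\<in>UNIV. \<Sum>b\<in>UNIV. \<Sum>c\<in>UNIV. \<Sum>d\<in>UNIV. (cmod (D a b c d))\<^sup>2) = 0"
  proof -
    have "complex_of_real (\<Sum>a\<in>UNIV. \<Sum>b\<in>UNIV. \<Sum>c\<in>UNIV. \<Sum>d\<in>UNIV. (cmod (D a b c d))\<^sup>2) = 0"
      using tot unfolding nn by simp
    thus ?thesis by (simp only: of_real_eq_0_iff)
  qed
  hence "D a b c d = 0"
    by (cases a; cases b; cases c; cases d) (simp_all add: sum_bool add_nonneg_eq_0_iff)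
  thus ?thesis unfolding D_def S_def m_def E_def by simp
qed




definition sg :: "(nat \<Rightarrow> bool \<Rightarrow> complex) \<Rightarrow> nat \<Rightarrow> bool \<Rightarrow> bool \<Rightarrow> complex" where
  "sg \<psi> i a b = 3 * \<psi> i a * cnj (\<psi> i b) - (if a = b then 1 else 0)"

definition pauli :: "nat \<Rightarrow> bool \<Rightarrow> bool \<Rightarrow> complex" where
  "pauli j a b = (if j = 0 then (if a = b then 1 else 0)
     else if j = 1 then (if a = b then 0 else 1)
     else if j = 2 then (if a = b then 0 else if a then \<i> else - \<i>)
     else (if a = b then (if a then 1 else -1) else 0))"

definition mu :: "nat \<Rightarrow> real" where "mu j = (if j = 0 then 1 else 3)"

definition perp :: "(bool \<Rightarrow> complex) \<Rightarrow> bool \<Rightarrow> complex" where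
  "perp v b = (if b then - cnj (v False) else cnj (v True))"

lemma sic_norm:
  assumes sic: "is_qubit_SIC \<psi>" and i: "i < 4"
  shows "\<psi> i True * cnj (\<psi> i True) + \<psi> i False * cnj (\<psi> i False) = 1"
proof -
  have "(\<Sum>b\<in>UNIV. (cmod (\<psi> i b))\<^sup>2) = 1" using sic i unfolding is_qubit_SIC_def by blast
  hence "complex_of_real (\<Sum>b\<in>UNIV. (cmod (\<psi> i b))\<^sup>2) = 1" by simp
  hence "(\<Sum>b\<in>UNIV. \<psi> i b * cnj (\<psi> i b)) = 1" by (simp only: of_real_sum complex_norm_square)
  thus ?thesis by (simp add: sum_bool)
qed

lemma F1a:
  assumes sic: "is_qubit_SIC \<psi>"
  shows "(\<Sum>i<4. \<psi> i a * cnj (\<psi> i b)) = 2 * dl a b"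
proof -
  have "(\<Sum>i<4. \<psi> i a * cnj (\<psi> i b)) =
     (\<Sum>i<4. \<psi> i a * cnj (\<psi> i b) * (\<psi> i True * cnj (\<psi> i True) + \<psi> i False * cnj (\<psi> i False)))"
    using sic_norm[OF sic] by (simp add: sum4)
  also have "\<dots> = (\<Sum>i<4. \<psi> i a * cnj (\<psi> i b) * \<psi> i True * cnj (\<psi> i True))
       + (\<Sum>i<4. \<psi> i a * cnj (\<psi> i b) * \<psi> i False * cnj (\<psi> i False))"
    by (simp add: sum4 algebra_simps)
  also have "\<dots> = 2 * dl a b" unfolding M4[OF sic] by (simp add: dl_def)
  finally show ?thesis .
qed

lemma F1:
  assumes sic: "is_qubit_SIC \<psi>"
  shows "(\<Sum>i<4. cnj (\<psi> i a) * \<psi> i b) = 2 * dl a b"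
  using F1a[OF sic, of b a] by (simp add: mult.commute dl_def)

lemma F2:
  assumes sic: "is_qubit_SIC \<psi>"
  shows "(\<Sum>i<4. cnj (\<psi> i u) * \<psi> i v * sg \<psi> i y x / 2) = dl u y * dl v x"
proof -
  have "(\<Sum>i<4. cnj (\<psi> i u) * \<psi> i v * sg \<psi> i y x / 2)
     = 3/2 * (\<Sum>i<4. \<psi> i y * cnj (\<psi> i u) * \<psi> i v * cnj (\<psi> i x))
       - dl y x / 2 * (\<Sum>i<4. cnj (\<psi> i u) * \<psi> i v)"
    unfolding sg_def dl_def by (simp add: sum4 algebra_simps add_divide_distrib diff_divide_distrib)
  also have "\<dots> = dl u y * dl v x"
    unfolding M4[OF sic] F1[OF sic] by (simp add: dl_def)
  finally show ?thesis .
qed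

lemma F3:
  assumes sic: "is_qubit_SIC \<psi>" and i: "i < 4"
  shows "(\<Sum>a\<in>UNIV. \<Sum>b\<in>UNIV. sg \<psi> i a b * cnj (sg \<psi> i a b)) = 5"
proof -
  define n where "n = \<psi> i True * cnj (\<psi> i True) + \<psi> i False * cnj (\<psi> i False)"
  have "(\<Sum>a\<in>UNIV. \<Sum>b\<in>UNIV. sg \<psi> i a b * cnj (sg \<psi> i a b)) = 9 * n^2 - 6 * n + 2"
    unfolding sg_def n_def by (simp add: sum_bool algebra_simps power2_eq_square)
  also have "\<dots> = 5" using sic_norm[OF sic i] unfolding n_def by simp
  finally show ?thesis .
qed

lemma F4:
  assumes sic: "is_qubit_SIC \<psi>" and i: "i < 4"
  shows "(\<Sum>b\<in>UNIV. sg \<psi> i b b) = 1"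
proof -
  have "(\<Sum>b\<in>UNIV. sg \<psi> i b b) = 3 * (\<psi> i True * cnj (\<psi> i True) + \<psi> i False * cnj (\<psi> i False)) - 2"
    unfolding sg_def by (simp add: sum_bool algebra_simps)
  thus ?thesis using sic_norm[OF sic i] by simp
qed

lemma F5: "cnj (sg \<psi> i a b) = sg \<psi> i b a"
  unfolding sg_def by (simp add: mult.commute)

lemma F6:
  assumes sic: "is_qubit_SIC \<psi>"
  shows "(\<Sum>i<4. sg \<psi> i p q * cnj (sg \<psi> i r t)) = 6 * dl p r * dl q t - 2 * dl p q * dl r t"
proof -
  have "(\<Sum>i<4. sg \<psi> i p q * cnj (sg \<psi> i r t))
    = 9 * (\<Sum>i<4. \<psi> i p * cnj (\<psi> i q) * \<psi> i t * cnj (\<psi> i r))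
      - 3 * dl t r * (\<Sum>i<4. \<psi> i p * cnj (\<psi> i q))
      - 3 * dl p q * (\<Sum>i<4. \<psi> i t * cnj (\<psi> i r)) + 4 * dl p q * dl t r"
    unfolding F5 unfolding sg_def dl_def by (simp add: sum4 algebra_simps)
  also have "\<dots> = 6 * dl p r * dl q t - 2 * dl p q * dl r t"
    unfolding M4[OF sic] F1a[OF sic] by (simp add: dl_def)
  finally show ?thesis .
qed

lemma pauli_W: "6 * dl p r * dl q t - 2 * dl p q * dl r t
   = (\<Sum>j<4. complex_of_real (mu j) * (pauli j p q * cnj (pauli j r t)))"
  unfolding sum4 mu_def pauli_def dl_def
  by (cases p; cases q; cases r; cases t) simp_all

lemma pauli_complete: "(\<Sum>j<4. pauli j p q * cnj (pauli j r t)) = 2 * (dl p r * dl q t)"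
  unfolding sum4 pauli_def dl_def
  by (cases p; cases q; cases r; cases t) simp_all

lemma perp_complete:
  assumes "v True * cnj (v True) + v False * cnj (v False) = 1"
  shows "cnj (v x) * v y + cnj (perp v x) * perp v y = dl x y"
  using assms unfolding perp_def dl_def
  by (cases x; cases y) (simp_all add: algebra_simps)




lemma qbasis_finite: "finite I \<Longrightarrow> finite (qbasis I)"
  unfolding qbasis_def by (simp add: finite_PiE)

lemma PD:
  assumes "finite I" "x \<in> qbasis I" "y \<in> qbasis I"
  shows "(\<Prod>n\<in>I. dl (x n) (y n)) = dl x y"
proof (cases "x = y")
  case True thus ?thesis by (simp add: dl_def)
next
  case False
  then obtain n where n: "n \<in> I" "x n \<noteq> y n"
  proof -
    have "\<not> (\<forall>n\<in>I. x n = y n)" using False assms(2,3) PiE_ext[of x I _ y] unfolding qbasis_def by blast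
    thus ?thesis using that by blast
  qed
  hence "dl (x n) (y n) = 0" by (simp add: dl_def)
  hence "\<exists>a\<in>I. dl (x a) (y a) = 0" using n by blast
  hence "(\<Prod>n\<in>I. dl (x n) (y n)) = 0" using assms(1) by (simp add: prod_zero_iff)
  thus ?thesis using False by (simp add: dl_def)
qed

lemma sum_PiE_swap:
  fixes r :: "'x \<Rightarrow> 'y \<Rightarrow> complex"
  assumes "finite I" "\<And>n. n \<in> I \<Longrightarrow> finite (J n)"
  shows "(\<Sum>c\<in>PiE I J. \<Sum>x\<in>X. \<Sum>y\<in>Y. r x y * (\<Prod>n\<in>I. h n (c n) x y))
       = (\<Sum>x\<in>X. \<Sum>y\<in>Y. r x y * (\<Prod>n\<in>I. \<Sum>j\<in>J n. h n j x y))"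
proof -
  have "(\<Sum>c\<in>PiE I J. \<Sum>x\<in>X. \<Sum>y\<in>Y. r x y * (\<Prod>n\<in>I. h n (c n) x y))
      = (\<Sum>x\<in>X. \<Sum>c\<in>PiE I J. \<Sum>y\<in>Y. r x y * (\<Prod>n\<in>I. h n (c n) x y))"
    by (rule sum.swap)
  also have "\<dots> = (\<Sum>x\<in>X. \<Sum>y\<in>Y. \<Sum>c\<in>PiE I J. r x y * (\<Prod>n\<in>I. h n (c n) x y))"
    by (rule sum.cong[OF refl], rule sum.swap)
  also have "\<dots> = (\<Sum>x\<in>X. \<Sum>y\<in>Y. r x y * (\<Prod>n\<in>I. \<Sum>j\<in>J n. h n j x y))"
    by (simp add: sum_distrib_left prod_sum_PiE[OF assms])
  finally show ?thesis .
qed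

lemma trace_complete:
  fixes u :: "nat \<Rightarrow> nat \<Rightarrow> bool \<Rightarrow> complex" and \<rho> :: qop
  assumes I: "finite I" and J: "\<And>n. n \<in> I \<Longrightarrow> finite (J n)"
    and C: "\<And>n a b. n \<in> I \<Longrightarrow> (\<Sum>j\<in>J n. cnj (u n j a) * u n j b) = C n * dl a b"
  shows "(\<Sum>c\<in>PiE I J. \<Sum>x\<in>qbasis I. \<Sum>y\<in>qbasis I.
            cnj (\<Prod>n\<in>I. u n (c n) (x n)) * \<rho> x y * (\<Prod>n\<in>I. u n (c n) (y n)))
       = (\<Prod>n\<in>I. C n) * (\<Sum>x\<in>qbasis I. \<rho> x x)"
proof -
  have "(\<Sum>c\<in>PiE I J. \<Sum>x\<in>qbasis I. \<Sum>y\<in>qbasis I.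
            cnj (\<Prod>n\<in>I. u n (c n) (x n)) * \<rho> x y * (\<Prod>n\<in>I. u n (c n) (y n)))
      = (\<Sum>c\<in>PiE I J. \<Sum>x\<in>qbasis I. \<Sum>y\<in>qbasis I.
            \<rho> x y * (\<Prod>n\<in>I. cnj (u n (c n) (x n)) * u n (c n) (y n)))"
    by (intro sum.cong refl) (simp add: cnj_prod prod.distrib mult_ac)
  also have "\<dots> = (\<Sum>x\<in>qbasis I. \<Sum>y\<in>qbasis I. \<rho> x y * (\<Prod>n\<in>I. \<Sum>j\<in>J n. cnj (u n j (x n)) * u n j (y n)))"
    by (rule sum_PiE_swap[OF I J])
  also have "\<dots> = (\<Sum>x\<in>qbasis I. \<Sum>y\<in>qbasis I. \<rho> x y * ((\<Prod>n\<in>I. C n) * dl x y))"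
  proof (intro sum.cong refl)
    fix x y assume xy: "x \<in> qbasis I" "y \<in> qbasis I"
    have "(\<Prod>n\<in>I. \<Sum>j\<in>J n. cnj (u n j (x n)) * u n j (y n)) = (\<Prod>n\<in>I. C n * dl (x n) (y n))"
      using C by (intro prod.cong) auto
    also have "\<dots> = (\<Prod>n\<in>I. C n) * dl x y" by (simp add: prod.distrib PD[OF I xy])
    finally show "\<rho> x y * (\<Prod>n\<in>I. \<Sum>j\<in>J n. cnj (u n j (x n)) * u n j (y n)) = \<rho> x y * ((\<Prod>n\<in>I. C n) * dl x y)"
      by simp
  qed
  also have "\<dots> = (\<Prod>n\<in>I. C n) * (\<Sum>x\<in>qbasis I. \<rho> x x)"
  proof -
    have "(\<Sum>y\<in>qbasis I. \<rho> x y * ((\<Prod>n\<in>I. C n) * dl x y)) = (\<Prod>n\<in>I. C n) * \<rho> x x"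
      if x: "x \<in> qbasis I" for x
    proof -
      have "(\<Sum>y\<in>qbasis I. \<rho> x y * ((\<Prod>n\<in>I. C n) * dl x y))
          = (\<Sum>y\<in>qbasis I. if x = y then (\<Prod>n\<in>I. C n) * \<rho> x y else 0)"
        by (intro sum.cong refl) (simp add: dl_def)
      also have "\<dots> = (\<Prod>n\<in>I. C n) * \<rho> x x" using x qbasis_finite[OF I] by simp
      finally show ?thesis .
    qed
    thus ?thesis by (simp add: sum_distrib_left)
  qed
  finally show ?thesis .
qed

definition qmerge :: "nat set \<Rightarrow> (nat \<Rightarrow> 'a) \<Rightarrow> (nat \<Rightarrow> 'a) \<Rightarrow> nat \<Rightarrow> 'a" where
  "qmerge K a c = (\<lambda>n. if n \<in> K then a n else c n)"

lemma sum_qbasis_split: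
  assumes I: "finite I" and K: "K \<subseteq> I"
  shows "(\<Sum>x\<in>qbasis I. f x) = (\<Sum>a\<in>qbasis K. \<Sum>c\<in>qbasis (I - K). f (qmerge K a c))"
proof -
  have "(\<Sum>x\<in>qbasis I. f x) = (\<Sum>(a,c)\<in>qbasis K \<times> qbasis (I - K). f (qmerge K a c))"
  proof (rule sum.reindex_bij_witness[of _ "\<lambda>(a,c). qmerge K a c" "\<lambda>x. (restrict x K, restrict x (I - K))"])
    fix x assume x: "x \<in> qbasis I"
    show "(case (restrict x K, restrict x (I - K)) of (a, c) \<Rightarrow> qmerge K a c) = x"
      using x K unfolding qbasis_def qmerge_def by (auto simp: restrict_def PiE_def extensional_def fun_eq_iff)
  next
    fix x assume x: "x \<in> qbasis I"
    show "(restrict x K, restrict x (I - K)) \<in> qbasis K \<times> qbasis (I - K)"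
      unfolding qbasis_def by auto
  next
    fix ac assume "ac \<in> qbasis K \<times> qbasis (I - K)"
    then obtain a c where ac: "ac = (a,c)" "a \<in> qbasis K" "c \<in> qbasis (I - K)" by auto
    show "(restrict (case ac of (a, c) \<Rightarrow> qmerge K a c) K, restrict (case ac of (a, c) \<Rightarrow> qmerge K a c) (I - K)) = ac"
      using ac unfolding qbasis_def qmerge_def by (auto simp: restrict_def PiE_def extensional_def fun_eq_iff)
  next
    fix ac assume "ac \<in> qbasis K \<times> qbasis (I - K)"
    then obtain a c where ac: "ac = (a,c)" "a \<in> qbasis K" "c \<in> qbasis (I - K)" by auto
    show "(case ac of (a, c) \<Rightarrow> qmerge K a c) \<in> qbasis I"
      using ac K unfolding qbasis_def qmerge_def by (auto simp: PiE_def extensional_def)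
  next
    fix x assume x: "x \<in> qbasis I"
    have "qmerge K (restrict x K) (restrict x (I - K)) = x"
      using x K unfolding qbasis_def qmerge_def by (auto simp: restrict_def PiE_def extensional_def fun_eq_iff)
    thus "(case (restrict x K, restrict x (I - K)) of (a, c) \<Rightarrow> f (qmerge K a c)) = f x"
      by simp
  qed
  also have "\<dots> = (\<Sum>a\<in>qbasis K. \<Sum>c\<in>qbasis (I - K). f (qmerge K a c))"
    by (rule sum.cartesian_product[symmetric])
  finally show ?thesis .
qed

lemma prod_qmerge:
  assumes I: "finite I" and K: "K \<subseteq> I"
  shows "(\<Prod>n\<in>I. g n (qmerge K a c n)) = (\<Prod>n\<in>K. g n (a n)) * (\<Prod>n\<in>I - K. g n (c n))"
proof -
  have "(\<Prod>n\<in>I. g n (qmerge K a c n)) = (\<Prod>n\<in>K. g n (qmerge K a c n)) * (\<Prod>n\<in>I - K. g n (qmerge K a c n))"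
    using prod.subset_diff[OF K I] by (simp add: mult.commute)
  thus ?thesis unfolding qmerge_def by simp
qed

lemma sum_qbasis_prod:
  fixes h :: "nat \<Rightarrow> bool \<Rightarrow> complex"
  assumes K: "finite K"
  shows "(\<Sum>a\<in>qbasis K. \<Prod>n\<in>K. h n (a n)) = (\<Prod>n\<in>K. \<Sum>b\<in>UNIV. h n b)"
  unfolding qbasis_def using prod_sum_PiE[OF K, of "\<lambda>_. UNIV" h] by simp

lemma sum_qbasis_prod2:
  fixes h :: "nat \<Rightarrow> bool \<Rightarrow> bool \<Rightarrow> complex"
  assumes K: "finite K"
  shows "(\<Sum>a\<in>qbasis K. \<Sum>a'\<in>qbasis K. \<Prod>n\<in>K. h n (a n) (a' n)) = (\<Prod>n\<in>K. \<Sum>b\<in>UNIV. \<Sum>b'\<in>UNIV. h n b b')"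
proof -
  have "(\<Sum>a\<in>qbasis K. \<Sum>a'\<in>qbasis K. \<Prod>n\<in>K. h n (a n) (a' n)) = (\<Sum>a\<in>qbasis K. \<Prod>n\<in>K. \<Sum>b'\<in>UNIV. h n (a n) b')"
    by (intro sum.cong refl) (rule sum_qbasis_prod[OF K])
  also have "\<dots> = (\<Prod>n\<in>K. \<Sum>b\<in>UNIV. \<Sum>b'\<in>UNIV. h n b b')"
    by (rule sum_qbasis_prod[OF K])
  finally show ?thesis .
qed

lemma sq_sum_prod:
  fixes Ob :: "'z \<Rightarrow> complex" and f :: "nat \<Rightarrow> nat \<Rightarrow> 'z \<Rightarrow> complex" and w :: "nat \<Rightarrow> nat \<Rightarrow> complex"
  assumes K: "finite K" and J: "\<And>n. n \<in> K \<Longrightarrow> finite (J n)"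
  shows "(\<Sum>t\<in>PiE K J. (\<Prod>n\<in>K. w n (t n)) * ((\<Sum>z\<in>Z. Ob z * (\<Prod>n\<in>K. f n (t n) z)) * cnj (\<Sum>z\<in>Z. Ob z * (\<Prod>n\<in>K. f n (t n) z))))
    = (\<Sum>z\<in>Z. \<Sum>z'\<in>Z. Ob z * cnj (Ob z') * (\<Prod>n\<in>K. \<Sum>j\<in>J n. w n j * (f n j z * cnj (f n j z'))))"
proof -
  have "(\<Sum>t\<in>PiE K J. (\<Prod>n\<in>K. w n (t n)) * ((\<Sum>z\<in>Z. Ob z * (\<Prod>n\<in>K. f n (t n) z)) * cnj (\<Sum>z\<in>Z. Ob z * (\<Prod>n\<in>K. f n (t n) z))))
     = (\<Sum>t\<in>PiE K J. \<Sum>z\<in>Z. \<Sum>z'\<in>Z. Ob z * cnj (Ob z') * (\<Prod>n\<in>K. w n (t n) * (f n (t n) z * cnj (f n (t n) z'))))"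
  proof (intro sum.cong refl)
    fix t
    have "(\<Prod>n\<in>K. w n (t n)) * ((\<Sum>z\<in>Z. Ob z * (\<Prod>n\<in>K. f n (t n) z)) * cnj (\<Sum>z\<in>Z. Ob z * (\<Prod>n\<in>K. f n (t n) z)))
      = (\<Prod>n\<in>K. w n (t n)) * (\<Sum>z\<in>Z. \<Sum>z'\<in>Z. (Ob z * (\<Prod>n\<in>K. f n (t n) z)) * (cnj (Ob z') * (\<Prod>n\<in>K. cnj (f n (t n) z'))))"
      by (simp only: cnj_sum complex_cnj_mult cnj_prod sum_product)
    also have "\<dots> = (\<Sum>z\<in>Z. \<Sum>z'\<in>Z. Ob z * cnj (Ob z') * (\<Prod>n\<in>K. w n (t n) * (f n (t n) z * cnj (f n (t n) z'))))"
      by (simp add: sum_distrib_left prod.distrib mult_ac)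
    finally show "(\<Prod>n\<in>K. w n (t n)) * ((\<Sum>z\<in>Z. Ob z * (\<Prod>n\<in>K. f n (t n) z)) * cnj (\<Sum>z\<in>Z. Ob z * (\<Prod>n\<in>K. f n (t n) z)))
      = (\<Sum>z\<in>Z. \<Sum>z'\<in>Z. Ob z * cnj (Ob z') * (\<Prod>n\<in>K. w n (t n) * (f n (t n) z * cnj (f n (t n) z'))))" .
  qed
  also have "\<dots> = (\<Sum>z\<in>Z. \<Sum>z'\<in>Z. Ob z * cnj (Ob z') * (\<Prod>n\<in>K. \<Sum>j\<in>J n. w n j * (f n j z * cnj (f n j z'))))"
    by (rule sum_PiE_swap[OF K J])
  finally show ?thesis .
qed




definition qq :: "(nat \<Rightarrow> bool \<Rightarrow> complex) \<Rightarrow> nat \<Rightarrow> qop \<Rightarrow> (nat \<Rightarrow> nat) \<Rightarrow> complex" where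
  "qq \<psi> N \<rho> s = (\<Sum>x\<in>qbasis {0..<N}. \<Sum>y\<in>qbasis {0..<N}.
       cnj (product_vec \<psi> N s x) * \<rho> x y * product_vec \<psi> N s y)"

lemma qq_real:
  assumes "density_matrix N \<rho>"
  shows "Im (qq \<psi> N \<rho> s) = 0" "Re (qq \<psi> N \<rho> s) \<ge> 0"
proof -
  have "psd_on {0..<N} \<rho>" using assms unfolding density_matrix_def by blast
  hence "Im (qq \<psi> N \<rho> s) = 0 \<and> Re (qq \<psi> N \<rho> s) \<ge> 0"
    unfolding psd_on_def qq_def Let_def by (rule allE[where x="product_vec \<psi> N s"])
  thus "Im (qq \<psi> N \<rho> s) = 0" "Re (qq \<psi> N \<rho> s) \<ge> 0" by auto
qed

lemma prob_nonneg: "density_matrix N \<rho> \<Longrightarrow> outcome_prob \<psi> N \<rho> s \<ge> 0"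
  using qq_real(2)[of N \<rho> \<psi> s] unfolding outcome_prob_def qq_def by simp

lemma prob_complex: "density_matrix N \<rho> \<Longrightarrow> complex_of_real (outcome_prob \<psi> N \<rho> s) = qq \<psi> N \<rho> s / 2 ^ N"
proof -
  assume d: "density_matrix N \<rho>"
  have "qq \<psi> N \<rho> s = complex_of_real (Re (qq \<psi> N \<rho> s))"
    using qq_real(1)[OF d, of \<psi> s] by (simp add: complex_eq_iff)
  thus ?thesis unfolding outcome_prob_def qq_def[symmetric] by simp
qed

lemma I_eq: "{0..<N} = {..<(N::nat)}" by auto

lemma outcome_strings_PiE: "outcome_strings N = PiE {..<N} (\<lambda>_. {..<4})"
  unfolding outcome_strings_def by (simp only: atLeast0LessThan)

lemma finite_OS: "finite (outcome_strings N)"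
  unfolding outcome_strings_def by (simp add: finite_PiE)

lemma prob_sum:
  assumes sic: "is_qubit_SIC \<psi>" and d: "density_matrix N \<rho>"
  shows "(\<Sum>s\<in>outcome_strings N. outcome_prob \<psi> N \<rho> s) = 1"
proof -
  have "(\<Sum>s\<in>outcome_strings N. qq \<psi> N \<rho> s)
     = (\<Sum>c\<in>PiE {..<N} (\<lambda>_. {..<4}). \<Sum>x\<in>qbasis {..<N}. \<Sum>y\<in>qbasis {..<N}.
            cnj (\<Prod>n\<in>{..<N}. (\<lambda>n j. \<psi> j) n (c n) (x n)) * \<rho> x y * (\<Prod>n\<in>{..<N}. (\<lambda>n j. \<psi> j) n (c n) (y n)))"
    unfolding qq_def outcome_strings_PiE product_vec_def I_eq by simp
  also have "\<dots> = (\<Prod>n\<in>{..<N}. 2) * (\<Sum>x\<in>qbasis {..<N}. \<rho> x x)"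
    by (rule trace_complete) (auto simp: F1[OF sic])
  also have "\<dots> = 2 ^ N"
    using d unfolding density_matrix_def qtrace_def I_eq by simp
  finally have "(\<Sum>s\<in>outcome_strings N. qq \<psi> N \<rho> s) = 2 ^ N" .
  hence "complex_of_real (\<Sum>s\<in>outcome_strings N. outcome_prob \<psi> N \<rho> s) = 1"
    by (simp add: prob_complex[OF d] sum_divide_distrib[symmetric])
  thus ?thesis by (metis of_real_eq_1_iff)
qed

lemma shadow_prod: "sic_shadow \<psi> N s x y = (\<Prod>n<N. sg \<psi> (s n) (x n) (y n))"
  unfolding sic_shadow_def sg_def by simp

lemma unbiased_entry:
  assumes sic: "is_qubit_SIC \<psi>" and d: "density_matrix N \<rho>"
    and x: "x \<in> qbasis {0..<N}" and y: "y \<in> qbasis {0..<N}"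
  shows "(\<Sum>s\<in>outcome_strings N. complex_of_real (outcome_prob \<psi> N \<rho> s) * sic_shadow \<psi> N s y x) = \<rho> y x"
proof -
  have "(\<Sum>s\<in>outcome_strings N. complex_of_real (outcome_prob \<psi> N \<rho> s) * sic_shadow \<psi> N s y x)
     = (\<Sum>c\<in>PiE {..<N} (\<lambda>_. {..<4}). \<Sum>u\<in>qbasis {..<N}. \<Sum>v\<in>qbasis {..<N}.
            \<rho> u v * (\<Prod>n\<in>{..<N}. cnj (\<psi> (c n) (u n)) * \<psi> (c n) (v n) * sg \<psi> (c n) (y n) (x n) / 2))"
    unfolding outcome_strings_PiE
  proof (intro sum.cong refl)
    fix s
    have "complex_of_real (outcome_prob \<psi> N \<rho> s) * sic_shadow \<psi> N s y x
      = (\<Sum>u\<in>qbasis {..<N}. \<Sum>v\<in>qbasis {..<N}.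
            cnj (product_vec \<psi> N s u) * \<rho> u v * product_vec \<psi> N s v) * ((\<Prod>n<N. sg \<psi> (s n) (y n) (x n)) / 2 ^ N)"
      unfolding prob_complex[OF d] qq_def shadow_prod I_eq by simp
    also have "\<dots> = (\<Sum>u\<in>qbasis {..<N}. \<Sum>v\<in>qbasis {..<N}.
            \<rho> u v * (\<Prod>n\<in>{..<N}. cnj (\<psi> (s n) (u n)) * \<psi> (s n) (v n) * sg \<psi> (s n) (y n) (x n) / 2))"
      unfolding product_vec_def sum_distrib_right
    proof (intro sum.cong refl)
      fix u v
      have "(\<Prod>n\<in>{..<N}. cnj (\<psi> (s n) (u n)) * \<psi> (s n) (v n) * sg \<psi> (s n) (y n) (x n) / 2)
        = (\<Prod>n\<in>{..<N}. cnj (\<psi> (s n) (u n))) * (\<Prod>n\<in>{..<N}. \<psi> (s n) (v n)) * (\<Prod>n\<in>{..<N}. sg \<psi> (s n) (y n) (x n)) / 2 ^ N"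
        by (simp add: prod.distrib prod_dividef)
      thus "cnj (\<Prod>n<N. \<psi> (s n) (u n)) * \<rho> u v * (\<Prod>n<N. \<psi> (s n) (v n)) * ((\<Prod>n<N. sg \<psi> (s n) (y n) (x n)) / 2 ^ N)
        = \<rho> u v * (\<Prod>n\<in>{..<N}. cnj (\<psi> (s n) (u n)) * \<psi> (s n) (v n) * sg \<psi> (s n) (y n) (x n) / 2)"
        by (simp add: cnj_prod)
    qed
    finally show "complex_of_real (outcome_prob \<psi> N \<rho> s) * sic_shadow \<psi> N s y x = \<dots>" .
  qed
  also have "\<dots> = (\<Sum>u\<in>qbasis {..<N}. \<Sum>v\<in>qbasis {..<N}.
            \<rho> u v * (\<Prod>n\<in>{..<N}. \<Sum>j\<in>{..<4}. cnj (\<psi> j (u n)) * \<psi> j (v n) * sg \<psi> j (y n) (x n) / 2))"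
    by (rule sum_PiE_swap) auto
  also have "\<dots> = (\<Sum>u\<in>qbasis {..<N}. \<Sum>v\<in>qbasis {..<N}. \<rho> u v * (dl u y * dl v x))"
  proof (intro sum.cong refl)
    fix u v assume u: "u \<in> qbasis {..<N}" and v: "v \<in> qbasis {..<N}"
    have yx: "y \<in> qbasis {..<N}" "x \<in> qbasis {..<N}" using x y I_eq by auto
    have "(\<Prod>n\<in>{..<N}. \<Sum>j\<in>{..<4}. cnj (\<psi> j (u n)) * \<psi> j (v n) * sg \<psi> j (y n) (x n) / 2)
       = (\<Prod>n\<in>{..<N}. dl (u n) (y n) * dl (v n) (x n))"
      using F2[OF sic] by simp
    also have "\<dots> = dl u y * dl v x"
      by (simp add: prod.distrib PD u v yx)
    finally show "\<rho> u v * (\<Prod>n\<in>{..<N}. \<Sum>j\<in>{..<4}. cnj (\<psi> j (u n)) * \<psi> j (v n) * sg \<psi> j (y n) (x n) / 2)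
      = \<rho> u v * (dl u y * dl v x)" by simp
  qed
  also have "\<dots> = \<rho> y x"
  proof -
    have yx: "y \<in> qbasis {..<N}" "x \<in> qbasis {..<N}" using x y I_eq by auto
    have "(\<Sum>u\<in>qbasis {..<N}. \<Sum>v\<in>qbasis {..<N}. \<rho> u v * (dl u y * dl v x))
       = (\<Sum>u\<in>qbasis {..<N}. if u = y then \<rho> u x else 0)"
    proof (intro sum.cong refl)
      fix u assume u: "u \<in> qbasis {..<N}"
      have "(\<Sum>v\<in>qbasis {..<N}. \<rho> u v * (dl u y * dl v x)) = (\<Sum>v\<in>qbasis {..<N}. if v = x then \<rho> u v * dl u y else 0)"
        by (intro sum.cong refl) (simp add: dl_def)
      also have "\<dots> = \<rho> u x * dl u y" using yx qbasis_finite[of "{..<N}"] by simp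
      finally show "(\<Sum>v\<in>qbasis {..<N}. \<rho> u v * (dl u y * dl v x)) = (if u = y then \<rho> u x else 0)"
        by (simp add: dl_def)
    qed
    also have "\<dots> = \<rho> y x" using yx qbasis_finite[of "{..<N}"] by simp
    finally show ?thesis .
  qed
  finally show ?thesis .
qed




lemma prod_C:
  assumes K: "K \<subseteq> {..<N}"
  shows "(\<Prod>n\<in>{..<N}. (if n \<in> K then 1 else 2::complex)) = 2 ^ (N - card K)"
proof -
  have fK: "finite K" using K finite_subset by blast
  have "(\<Prod>n\<in>{..<N}. (if n \<in> K then 1 else 2::complex)) = (\<Prod>n\<in>{..<N} - K. 2)"
    by (rule prod.mono_neutral_cong_right) auto
  also have "\<dots> = 2 ^ card ({..<N} - K)" by simp
  also have "card ({..<N} - K) = N - card K" using K fK by (simp add: card_Diff_subset)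
  finally show ?thesis .
qed

lemma fiber_bound:
  assumes sic: "is_qubit_SIC \<psi>" and d: "density_matrix N \<rho>"
    and K: "K \<subseteq> {..<N}" and t: "t \<in> PiE K (\<lambda>_. {..<4})"
  shows "(\<Sum>s\<in>{s\<in>outcome_strings N. restrict s K = t}. outcome_prob \<psi> N \<rho> s) \<le> 1 / 2 ^ card K"
proof -
  have fK: "finite K" using K finite_subset by blast
  define J where "J n = (if n \<in> K then {0,1} else {..<4::nat})" for n
  define u where "u n j b = (if n \<in> K then (if j = 0 then \<psi> (t n) b else perp (\<psi> (t n)) b) else \<psi> j b)" for n j b
  define C where "C n = (if n \<in> K then 1 else 2::complex)" for n
  define Q where "Q c = (\<Sum>x\<in>qbasis {..<N}. \<Sum>y\<in>qbasis {..<N}.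
            cnj (\<Prod>n\<in>{..<N}. u n (c n) (x n)) * \<rho> x y * (\<Prod>n\<in>{..<N}. u n (c n) (y n)))" for c
  have tK: "t n < 4" if "n \<in> K" for n using t that by auto
  have Cu: "(\<Sum>j\<in>J n. cnj (u n j a) * u n j b) = C n * dl a b" if "n \<in> {..<N}" for n a b
  proof (cases "n \<in> K")
    case True
    have "\<psi> (t n) True * cnj (\<psi> (t n) True) + \<psi> (t n) False * cnj (\<psi> (t n) False) = 1"
      by (rule sic_norm[OF sic tK[OF True]])
    from perp_complete[OF this, of a b] show ?thesis using True unfolding J_def u_def C_def by simp
  next
    case False
    thus ?thesis unfolding J_def u_def C_def using F1[OF sic] by simp
  qed
  have tot: "(\<Sum>c\<in>PiE {..<N} J. Q c) = 2 ^ (N - card K)"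
  proof -
    have "(\<Sum>c\<in>PiE {..<N} J. Q c) = (\<Prod>n\<in>{..<N}. C n) * (\<Sum>x\<in>qbasis {..<N}. \<rho> x x)"
      unfolding Q_def by (rule trace_complete[OF _ _ Cu]) (auto simp: J_def)
    also have "(\<Sum>x\<in>qbasis {..<N}. \<rho> x x) = 1"
      using d unfolding density_matrix_def qtrace_def I_eq by simp
    finally show ?thesis using prod_C[OF K] unfolding C_def by simp
  qed
  have Qreal: "Im (Q c) = 0 \<and> Re (Q c) \<ge> 0" for c
  proof -
    have "psd_on {..<N} \<rho>" using d unfolding density_matrix_def I_eq by blast
    thus ?thesis unfolding psd_on_def Q_def Let_def cnj_prod[symmetric]
      by (rule allE[where x="\<lambda>x. \<Prod>n\<in>{..<N}. u n (c n) (x n)"])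
  qed
  define g where "g s = (\<lambda>n. if n \<in> K then 0 else s n)" for s :: "nat \<Rightarrow> nat"
  let ?F = "{s\<in>outcome_strings N. restrict s K = t}"
  have sK: "s n = t n" if "s \<in> ?F" "n \<in> K" for s n
    using that by (metis (mono_tags, lifting) mem_Collect_eq restrict_apply')
  have inj: "inj_on g ?F"
  proof (rule inj_onI)
    fix s s' assume s: "s \<in> ?F" and s': "s' \<in> ?F" and e: "g s = g s'"
    show "s = s'"
    proof
      fix n show "s n = s' n"
      proof (cases "n \<in> K")
        case True thus ?thesis using sK[OF s True] sK[OF s' True] by simp
      next
        case False thus ?thesis using fun_cong[OF e, of n] unfolding g_def by simp
      qed
    qed
  qed
  have img: "g ` ?F \<subseteq> PiE {..<N} J"
  proof
    fix c assume "c \<in> g ` ?F"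
    then obtain s where s: "s \<in> ?F" and c: "c = g s" by blast
    have sOS: "s \<in> PiE {..<N} (\<lambda>_. {..<4})" using s outcome_strings_PiE by auto
    show "c \<in> PiE {..<N} J"
      using sOS K unfolding c g_def J_def by (auto simp: PiE_def extensional_def)
  qed
  have Qg: "Q (g s) = qq \<psi> N \<rho> s" if s: "s \<in> ?F" for s
  proof -
    have "(\<Prod>n\<in>{..<N}. u n (g s n) (x n)) = product_vec \<psi> N s x" for x
      unfolding product_vec_def u_def g_def by (intro prod.cong refl) (auto simp: sK[OF s])
    thus ?thesis unfolding Q_def qq_def I_eq by simp
  qed
  have "(\<Sum>s\<in>?F. Re (qq \<psi> N \<rho> s)) = (\<Sum>s\<in>?F. Re (Q (g s)))"
    by (intro sum.cong refl) (simp add: Qg)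
  also have "\<dots> = (\<Sum>c\<in>g ` ?F. Re (Q c))"
    by (rule sum.reindex[OF inj, symmetric, unfolded comp_def])
  also have "\<dots> \<le> (\<Sum>c\<in>PiE {..<N} J. Re (Q c))"
    by (rule sum_mono2) (auto simp: J_def finite_PiE img Qreal)
  also have "\<dots> = 2 ^ (N - card K)"
    using arg_cong[OF tot, of Re] by (simp add: Re_sum)
  finally have A: "(\<Sum>s\<in>?F. Re (qq \<psi> N \<rho> s)) \<le> 2 ^ (N - card K)" .
  have kN: "card K \<le> N" using K card_mono[OF _ K] by simp
  have "(\<Sum>s\<in>?F. outcome_prob \<psi> N \<rho> s) = (\<Sum>s\<in>?F. Re (qq \<psi> N \<rho> s)) / 2 ^ N"
    unfolding outcome_prob_def qq_def by (simp add: sum_divide_distrib)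
  also have "\<dots> \<le> 2 ^ (N - card K) / 2 ^ N" using A by (simp add: divide_right_mono)
  also have "\<dots> = 1 / 2 ^ card K" using kN by (simp add: power_diff)
  finally show ?thesis .
qed


definition FK :: "(nat \<Rightarrow> bool \<Rightarrow> complex) \<Rightarrow> nat set \<Rightarrow> qop \<Rightarrow> (nat \<Rightarrow> nat) \<Rightarrow> complex" where
  "FK \<psi> K Ob s = (\<Sum>a\<in>qbasis K. \<Sum>a'\<in>qbasis K. Ob a a' * (\<Prod>n\<in>K. sg \<psi> (s n) (a' n) (a n)))"

lemma restrict_qmerge: "a \<in> qbasis K \<Longrightarrow> restrict (qmerge K a c) K = a"
  unfolding qbasis_def qmerge_def by (auto simp: restrict_def PiE_def extensional_def fun_eq_iff)

lemma qmerge_eq_off: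
  assumes "c \<in> qbasis J" "c' \<in> qbasis J" "J \<inter> K = {}"
  shows "(\<forall>i\<in>J. qmerge K a c i = qmerge K a' c' i) \<longleftrightarrow> c = c'"
proof
  assume h: "\<forall>i\<in>J. qmerge K a c i = qmerge K a' c' i"
  have "\<forall>i\<in>J. c i = c' i"
  proof
    fix i assume i: "i \<in> J"
    hence "i \<notin> K" using assms(3) by blast
    thus "c i = c' i" using h[rule_format, OF i] unfolding qmerge_def by simp
  qed
  thus "c = c'" using assms(1,2) PiE_ext[of c J _ c'] unfolding qbasis_def by blast
next
  assume "c = c'"
  thus "\<forall>i\<in>J. qmerge K a c i = qmerge K a' c' i" using assms(3) unfolding qmerge_def by auto
qed

lemma X_factor:
  assumes sic: "is_qubit_SIC \<psi>" and K: "K \<subseteq> {..<N}" and s: "s \<in> outcome_strings N"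
  shows "qtrace {0..<N} (qmult {0..<N} (extend_local N K Ob) (sic_shadow \<psi> N s)) = FK \<psi> K Ob s"
proof -
  define I where "I = {..<N}"
  have fI: "finite I" unfolding I_def by simp
  have KI: "K \<subseteq> I" using K unfolding I_def .
  have fK: "finite K" using K finite_subset by blast
  define T where "T x z = extend_local N K Ob x z * (\<Prod>n\<in>I. sg \<psi> (s n) (z n) (x n))" for x z
  define PK where "PK a a' = (\<Prod>n\<in>K. sg \<psi> (s n) (a' n) (a n))" for a a' :: "nat \<Rightarrow> bool"
  define PR where "PR c' c = (\<Prod>n\<in>I - K. sg \<psi> (s n) (c' n) (c n))" for c c' :: "nat \<Rightarrow> bool"
  have s4: "s n < 4" if "n \<in> I" for n using s that unfolding outcome_strings_def I_def by auto
  have "qtrace {0..<N} (qmult {0..<N} (extend_local N K Ob) (sic_shadow \<psi> N s)) = (\<Sum>x\<in>qbasis I. \<Sum>z\<in>qbasis I. T x z)"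
    unfolding qtrace_def qmult_def shadow_prod T_def I_def I_eq by simp
  also have "\<dots> = (\<Sum>a\<in>qbasis K. \<Sum>c\<in>qbasis (I - K). \<Sum>z\<in>qbasis I. T (qmerge K a c) z)"
    by (rule sum_qbasis_split[OF fI KI])
  also have "\<dots> = (\<Sum>a\<in>qbasis K. \<Sum>c\<in>qbasis (I - K). \<Sum>a'\<in>qbasis K. \<Sum>c'\<in>qbasis (I - K). T (qmerge K a c) (qmerge K a' c'))"
    by (rule sum.cong[OF refl], rule sum.cong[OF refl], rule sum_qbasis_split[OF fI KI])
  also have "\<dots> = (\<Sum>a\<in>qbasis K. \<Sum>c\<in>qbasis (I - K). \<Sum>a'\<in>qbasis K. Ob a a' * PK a a' * PR c c)"
  proof (intro sum.cong refl)
    fix a c a' assume a: "a \<in> qbasis K" and c: "c \<in> qbasis (I - K)" and a': "a' \<in> qbasis K"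
    have "T (qmerge K a c) (qmerge K a' c') = (if c = c' then Ob a a' * PK a a' * PR c' c else 0)"
      if c': "c' \<in> qbasis (I - K)" for c'
    proof -
      have e1: "(\<forall>i\<in>{0..<N} - K. qmerge K a c i = qmerge K a' c' i) \<longleftrightarrow> c = c'"
      proof -
        have dj: "(I - K) \<inter> K = {}" by blast
        have ee: "{0..<N} - K = I - K" unfolding I_def by auto
        show ?thesis using qmerge_eq_off[OF c c' dj, of a a'] unfolding ee .
      qed
      have e2: "(\<Prod>n\<in>I. sg \<psi> (s n) (qmerge K a' c' n) (qmerge K a c n)) = PK a a' * PR c' c"
      proof -
        have "(\<Prod>n\<in>I. sg \<psi> (s n) (qmerge K a' c' n) (qmerge K a c n))
           = (\<Prod>n\<in>K. sg \<psi> (s n) (qmerge K a' c' n) (qmerge K a c n)) * (\<Prod>n\<in>I - K. sg \<psi> (s n) (qmerge K a' c' n) (qmerge K a c n))"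
          using prod.subset_diff[OF KI fI] by (simp add: mult.commute)
        thus ?thesis unfolding PK_def PR_def qmerge_def by simp
      qed
      show ?thesis unfolding T_def extend_local_def e1 e2 restrict_qmerge[OF a] restrict_qmerge[OF a'] by simp
    qed
    hence "(\<Sum>c'\<in>qbasis (I - K). T (qmerge K a c) (qmerge K a' c'))
        = (\<Sum>c'\<in>qbasis (I - K). if c = c' then Ob a a' * PK a a' * PR c' c else 0)"
      by (intro sum.cong refl) auto
    also have "\<dots> = Ob a a' * PK a a' * PR c c"
    proof -
      have fin: "finite (qbasis (I - K))" using fI by (simp add: qbasis_finite)
      show ?thesis using c fin by (simp add: sum.delta)
    qed
    finally show "(\<Sum>c'\<in>qbasis (I - K). T (qmerge K a c) (qmerge K a' c')) = Ob a a' * PK a a' * PR c c" .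
  qed
  also have "\<dots> = (\<Sum>a\<in>qbasis K. \<Sum>a'\<in>qbasis K. Ob a a' * PK a a' * (\<Sum>c\<in>qbasis (I - K). PR c c))"
  proof (rule sum.cong[OF refl])
    fix a
    show "(\<Sum>c\<in>qbasis (I - K). \<Sum>a'\<in>qbasis K. Ob a a' * PK a a' * PR c c)
       = (\<Sum>a'\<in>qbasis K. Ob a a' * PK a a' * (\<Sum>c\<in>qbasis (I - K). PR c c))"
      by (subst sum.swap) (simp only: sum_distrib_left)
  qed
  also have "(\<Sum>c\<in>qbasis (I - K). PR c c) = 1"
  proof -
    have "(\<Sum>c\<in>qbasis (I - K). PR c c) = (\<Prod>n\<in>I - K. \<Sum>b\<in>UNIV. sg \<psi> (s n) b b)"
      unfolding PR_def by (rule sum_qbasis_prod) (use fI in simp)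
    also have "\<dots> = 1" using F4[OF sic s4] by simp
    finally show ?thesis .
  qed
  finally show ?thesis unfolding FK_def PK_def by simp
qed




lemma FK_pair: "FK \<psi> K Ob t = (\<Sum>z\<in>qbasis K \<times> qbasis K. case_prod Ob z * (\<Prod>n\<in>K. sg \<psi> (t n) (snd z n) (fst z n)))"
  unfolding FK_def sum.cartesian_product by (intro sum.cong refl) (auto simp: case_prod_beta)

lemma FK_real:
  assumes h: "hermitian_on K Ob"
  shows "cnj (FK \<psi> K Ob t) = FK \<psi> K Ob t"
proof -
  have hh: "cnj (Ob a a') = Ob a' a" if "a \<in> qbasis K" "a' \<in> qbasis K" for a a'
  proof -
    have "Ob a' a = cnj (Ob a a')" using h that unfolding hermitian_on_def by blast
    thus ?thesis by simp
  qed
  have "cnj (FK \<psi> K Ob t) = (\<Sum>a\<in>qbasis K. \<Sum>a'\<in>qbasis K. cnj (Ob a a') * (\<Prod>n\<in>K. sg \<psi> (t n) (a n) (a' n)))"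
    unfolding FK_def by (simp only: cnj_sum complex_cnj_mult cnj_prod F5)
  also have "\<dots> = (\<Sum>a\<in>qbasis K. \<Sum>a'\<in>qbasis K. Ob a' a * (\<Prod>n\<in>K. sg \<psi> (t n) (a n) (a' n)))"
    by (intro sum.cong refl) (simp only: hh)
  also have "\<dots> = FK \<psi> K Ob t" unfolding FK_def by (rule sum.swap)
  finally show ?thesis .
qed

definition HS :: "nat set \<Rightarrow> qop \<Rightarrow> real" where
  "HS K Ob = (\<Sum>a\<in>qbasis K. \<Sum>a'\<in>qbasis K. (cmod (Ob a a'))\<^sup>2)"

lemma HS_trace:
  assumes h: "hermitian_on K Ob"
  shows "Re (qtrace K (qmult K Ob Ob)) = HS K Ob"
proof -
  have "qtrace K (qmult K Ob Ob) = (\<Sum>a\<in>qbasis K. \<Sum>a'\<in>qbasis K. complex_of_real ((cmod (Ob a a'))\<^sup>2))"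
    unfolding qtrace_def qmult_def
  proof (intro sum.cong refl)
    fix a a' assume "a \<in> qbasis K" "a' \<in> qbasis K"
    hence "Ob a' a = cnj (Ob a a')" using h unfolding hermitian_on_def by blast
    thus "Ob a a' * Ob a' a = complex_of_real ((cmod (Ob a a'))\<^sup>2)" by (simp only: complex_norm_square)
  qed
  thus ?thesis unfolding HS_def by (simp add: Re_sum)
qed

lemma cmod_sum_CS:
  fixes A B :: "'z \<Rightarrow> complex"
  shows "(cmod (\<Sum>z\<in>Z. A z * B z))\<^sup>2 \<le> (\<Sum>z\<in>Z. (cmod (A z))\<^sup>2) * (\<Sum>z\<in>Z. (cmod (B z))\<^sup>2)"
proof -
  have "cmod (\<Sum>z\<in>Z. A z * B z) \<le> (\<Sum>z\<in>Z. cmod (A z) * cmod (B z))"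
    using norm_sum[of "\<lambda>z. A z * B z" Z] by (simp add: norm_mult)
  hence "(cmod (\<Sum>z\<in>Z. A z * B z))\<^sup>2 \<le> (\<Sum>z\<in>Z. cmod (A z) * cmod (B z))\<^sup>2"
    by (simp add: power_mono)
  also have "\<dots> \<le> (\<Sum>z\<in>Z. (cmod (A z))\<^sup>2) * (\<Sum>z\<in>Z. (cmod (B z))\<^sup>2)"
    by (rule Cauchy_Schwarz_ineq_sum)
  finally show ?thesis .
qed

lemma FK_bound_sq:
  assumes sic: "is_qubit_SIC \<psi>" and K: "finite K" and t: "\<And>n. n \<in> K \<Longrightarrow> t n < 4"
  shows "(cmod (FK \<psi> K Ob t))\<^sup>2 \<le> HS K Ob * 5 ^ card K"
proof -
  let ?Z = "qbasis K \<times> qbasis K"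
  have "(cmod (FK \<psi> K Ob t))\<^sup>2 \<le> (\<Sum>z\<in>?Z. (cmod (case_prod Ob z))\<^sup>2) * (\<Sum>z\<in>?Z. (cmod (\<Prod>n\<in>K. sg \<psi> (t n) (snd z n) (fst z n)))\<^sup>2)"
    unfolding FK_pair by (rule cmod_sum_CS)
  also have "(\<Sum>z\<in>?Z. (cmod (case_prod Ob z))\<^sup>2) = HS K Ob"
    unfolding HS_def sum.cartesian_product by (intro sum.cong refl) (auto simp: case_prod_beta)
  also have "(\<Sum>z\<in>?Z. (cmod (\<Prod>n\<in>K. sg \<psi> (t n) (snd z n) (fst z n)))\<^sup>2) = 5 ^ card K"
  proof -
    have "complex_of_real (\<Sum>z\<in>?Z. (cmod (\<Prod>n\<in>K. sg \<psi> (t n) (snd z n) (fst z n)))\<^sup>2)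
       = (\<Sum>a\<in>qbasis K. \<Sum>a'\<in>qbasis K. \<Prod>n\<in>K. sg \<psi> (t n) (a' n) (a n) * cnj (sg \<psi> (t n) (a' n) (a n)))"
    proof -
      have "complex_of_real (\<Sum>z\<in>?Z. (cmod (\<Prod>n\<in>K. sg \<psi> (t n) (snd z n) (fst z n)))\<^sup>2)
         = (\<Sum>z\<in>?Z. (\<Prod>n\<in>K. sg \<psi> (t n) (snd z n) (fst z n)) * cnj (\<Prod>n\<in>K. sg \<psi> (t n) (snd z n) (fst z n)))"
        by (simp only: of_real_sum complex_norm_square)
      also have "\<dots> = (\<Sum>z\<in>?Z. \<Prod>n\<in>K. sg \<psi> (t n) (snd z n) (fst z n) * cnj (sg \<psi> (t n) (snd z n) (fst z n)))"
        by (simp only: cnj_prod prod.distrib[symmetric])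
      also have "\<dots> = (\<Sum>a\<in>qbasis K. \<Sum>a'\<in>qbasis K. \<Prod>n\<in>K. sg \<psi> (t n) (a' n) (a n) * cnj (sg \<psi> (t n) (a' n) (a n)))"
        unfolding sum.cartesian_product by (intro sum.cong refl) (auto simp: case_prod_beta)
      finally show ?thesis .
    qed
    also have "\<dots> = (\<Prod>n\<in>K. \<Sum>b\<in>UNIV. \<Sum>b'\<in>UNIV. sg \<psi> (t n) b' b * cnj (sg \<psi> (t n) b' b))"
      by (rule sum_qbasis_prod2[OF K])
    also have "\<dots> = (\<Prod>n\<in>K. 5)"
    proof (rule prod.cong[OF refl])
      fix n assume n: "n \<in> K"
      show "(\<Sum>b\<in>UNIV. \<Sum>b'\<in>UNIV. sg \<psi> (t n) b' b * cnj (sg \<psi> (t n) b' b)) = 5"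
      proof -
        have "(\<Sum>b\<in>UNIV. \<Sum>b'\<in>UNIV. sg \<psi> (t n) b' b * cnj (sg \<psi> (t n) b' b))
            = (\<Sum>b'\<in>UNIV. \<Sum>b\<in>UNIV. sg \<psi> (t n) b' b * cnj (sg \<psi> (t n) b' b))" by (rule sum.swap)
        thus ?thesis using F3[OF sic t[OF n]] by simp
      qed
    qed
    finally have "complex_of_real (\<Sum>z\<in>?Z. (cmod (\<Prod>n\<in>K. sg \<psi> (t n) (snd z n) (fst z n)))\<^sup>2) = complex_of_real (5 ^ card K)"
      by simp
    thus ?thesis by (simp only: of_real_eq_iff)
  qed
  finally show ?thesis .
qed


lemma FK_sum_bound:
  assumes sic: "is_qubit_SIC \<psi>" and K: "finite K"
  shows "(\<Sum>t\<in>PiE K (\<lambda>_. {..<4}). (cmod (FK \<psi> K Ob t))\<^sup>2) \<le> 6 ^ card K * HS K Ob"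
proof -
  let ?Z = "qbasis K \<times> qbasis K"
  let ?T = "PiE K (\<lambda>_. {..<4::nat})"
  define Ob' where "Ob' = case_prod Ob"
  define G where "G t = (\<Sum>z\<in>?Z. Ob' z * (\<Prod>n\<in>K. pauli (t n) (snd z n) (fst z n)))" for t :: "nat \<Rightarrow> nat"
  have FKp: "FK \<psi> K Ob t = (\<Sum>z\<in>?Z. Ob' z * (\<Prod>n\<in>K. sg \<psi> (t n) (snd z n) (fst z n)))" for t
    unfolding FK_pair Ob'_def ..
  have e1: "(\<Sum>t\<in>?T. complex_of_real ((cmod (FK \<psi> K Ob t))\<^sup>2))
     = (\<Sum>t\<in>?T. complex_of_real (\<Prod>n\<in>K. mu (t n)) * complex_of_real ((cmod (G t))\<^sup>2))"
  proof -
    have "(\<Sum>t\<in>?T. complex_of_real ((cmod (FK \<psi> K Ob t))\<^sup>2))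
       = (\<Sum>t\<in>?T. (\<Prod>n\<in>K. (\<lambda>n j. 1::complex) n (t n)) * (FK \<psi> K Ob t * cnj (FK \<psi> K Ob t)))"
      by (simp only: complex_norm_square prod.neutral_const mult_1)
    also have "\<dots> = (\<Sum>z\<in>?Z. \<Sum>z'\<in>?Z. Ob' z * cnj (Ob' z') *
        (\<Prod>n\<in>K. \<Sum>j\<in>{..<4}. 1 * (sg \<psi> j (snd z n) (fst z n) * cnj (sg \<psi> j (snd z' n) (fst z' n)))))"
      unfolding FKp by (rule sq_sum_prod[OF K]) simp
    also have "\<dots> = (\<Sum>z\<in>?Z. \<Sum>z'\<in>?Z. Ob' z * cnj (Ob' z') *
        (\<Prod>n\<in>K. \<Sum>j\<in>{..<4}. complex_of_real (mu j) * (pauli j (snd z n) (fst z n) * cnj (pauli j (snd z' n) (fst z' n)))))"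
      by (simp only: mult_1 F6[OF sic] pauli_W)
    also have "\<dots> = (\<Sum>t\<in>?T. (\<Prod>n\<in>K. complex_of_real (mu (t n))) * (G t * cnj (G t)))"
      unfolding G_def by (rule sq_sum_prod[OF K, symmetric]) simp
    also have "\<dots> = (\<Sum>t\<in>?T. complex_of_real (\<Prod>n\<in>K. mu (t n)) * complex_of_real ((cmod (G t))\<^sup>2))"
      by (simp only: complex_norm_square of_real_prod)
    finally show ?thesis .
  qed
  have e2: "(\<Sum>t\<in>?T. complex_of_real ((cmod (G t))\<^sup>2)) = complex_of_real (2 ^ card K * HS K Ob)"
  proof -
    have "(\<Sum>t\<in>?T. complex_of_real ((cmod (G t))\<^sup>2))
       = (\<Sum>t\<in>?T. (\<Prod>n\<in>K. (\<lambda>n j. 1::complex) n (t n)) * (G t * cnj (G t)))"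
      by (simp only: complex_norm_square prod.neutral_const mult_1)
    also have "\<dots> = (\<Sum>z\<in>?Z. \<Sum>z'\<in>?Z. Ob' z * cnj (Ob' z') *
        (\<Prod>n\<in>K. \<Sum>j\<in>{..<4}. 1 * (pauli j (snd z n) (fst z n) * cnj (pauli j (snd z' n) (fst z' n)))))"
      unfolding G_def by (rule sq_sum_prod[OF K]) simp
    also have "\<dots> = (\<Sum>z\<in>?Z. \<Sum>z'\<in>?Z. Ob' z * cnj (Ob' z') * (2 ^ card K * dl z z'))"
    proof (intro sum.cong refl)
      fix z z' assume z: "z \<in> ?Z" and z': "z' \<in> ?Z"
      have "(\<Prod>n\<in>K. \<Sum>j\<in>{..<4}. 1 * (pauli j (snd z n) (fst z n) * cnj (pauli j (snd z' n) (fst z' n))))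
          = (\<Prod>n\<in>K. 2 * (dl (snd z n) (snd z' n) * dl (fst z n) (fst z' n)))"
        by (simp only: mult_1 pauli_complete)
      also have "\<dots> = 2 ^ card K * (dl (snd z) (snd z') * dl (fst z) (fst z'))"
      proof -
        have m: "fst z \<in> qbasis K" "snd z \<in> qbasis K" "fst z' \<in> qbasis K" "snd z' \<in> qbasis K"
          using z z' by auto
        show ?thesis by (simp add: prod.distrib PD[OF K m(2) m(4)] PD[OF K m(1) m(3)])
      qed
      also have "\<dots> = 2 ^ card K * dl z z'"
        by (cases z; cases z') (simp add: dl_def)
      finally show "Ob' z * cnj (Ob' z') * (\<Prod>n\<in>K. \<Sum>j\<in>{..<4}. 1 * (pauli j (snd z n) (fst z n) * cnj (pauli j (snd z' n) (fst z' n))))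
          = Ob' z * cnj (Ob' z') * (2 ^ card K * dl z z')" by simp
    qed
    also have "\<dots> = (\<Sum>z\<in>?Z. 2 ^ card K * (Ob' z * cnj (Ob' z)))"
    proof (rule sum.cong[OF refl])
      fix z assume z: "z \<in> ?Z"
      have fin: "finite ?Z" using K by (simp add: qbasis_finite)
      have "(\<Sum>z'\<in>?Z. Ob' z * cnj (Ob' z') * (2 ^ card K * dl z z'))
          = (\<Sum>z'\<in>?Z. if z = z' then 2 ^ card K * (Ob' z * cnj (Ob' z')) else 0)"
        by (intro sum.cong refl) (simp add: dl_def)
      also have "\<dots> = 2 ^ card K * (Ob' z * cnj (Ob' z))" using z fin by (simp add: sum.delta)
      finally show "(\<Sum>z'\<in>?Z. Ob' z * cnj (Ob' z') * (2 ^ card K * dl z z')) = 2 ^ card K * (Ob' z * cnj (Ob' z))" .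
    qed
    also have "\<dots> = complex_of_real (2 ^ card K * HS K Ob)"
    proof -
      have "(\<Sum>z\<in>?Z. 2 ^ card K * (Ob' z * cnj (Ob' z))) = 2 ^ card K * (\<Sum>z\<in>?Z. complex_of_real ((cmod (Ob' z))\<^sup>2))"
        by (simp only: complex_norm_square sum_distrib_left)
      also have "(\<Sum>z\<in>?Z. (cmod (Ob' z))\<^sup>2) = HS K Ob"
        unfolding HS_def Ob'_def sum.cartesian_product by (intro sum.cong refl) (auto simp: case_prod_beta)
      hence "(\<Sum>z\<in>?Z. complex_of_real ((cmod (Ob' z))\<^sup>2)) = complex_of_real (HS K Ob)"
        by (simp only: of_real_sum[symmetric])
      finally show ?thesis by simp
    qed
    finally show ?thesis .
  qed
  have r1: "(\<Sum>t\<in>?T. (cmod (FK \<psi> K Ob t))\<^sup>2) = (\<Sum>t\<in>?T. (\<Prod>n\<in>K. mu (t n)) * (cmod (G t))\<^sup>2)"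
  proof -
    have "complex_of_real (\<Sum>t\<in>?T. (cmod (FK \<psi> K Ob t))\<^sup>2) = complex_of_real (\<Sum>t\<in>?T. (\<Prod>n\<in>K. mu (t n)) * (cmod (G t))\<^sup>2)"
      using e1 by (simp only: of_real_sum of_real_mult)
    thus ?thesis by (simp only: of_real_eq_iff)
  qed
  have r2: "(\<Sum>t\<in>?T. (cmod (G t))\<^sup>2) = 2 ^ card K * HS K Ob"
  proof -
    have "complex_of_real (\<Sum>t\<in>?T. (cmod (G t))\<^sup>2) = complex_of_real (2 ^ card K * HS K Ob)"
      using e2 by (simp only: of_real_sum)
    thus ?thesis by (simp only: of_real_eq_iff)
  qed
  have "(\<Sum>t\<in>?T. (\<Prod>n\<in>K. mu (t n)) * (cmod (G t))\<^sup>2) \<le> (\<Sum>t\<in>?T. 3 ^ card K * (cmod (G t))\<^sup>2)"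
  proof (rule sum_mono)
    fix t
    have "(\<Prod>n\<in>K. mu (t n)) \<le> (\<Prod>n\<in>K. 3)"
      by (rule prod_mono) (simp add: mu_def)
    thus "(\<Prod>n\<in>K. mu (t n)) * (cmod (G t))\<^sup>2 \<le> 3 ^ card K * (cmod (G t))\<^sup>2"
      by (simp add: mult_right_mono)
  qed
  also have "\<dots> = 3 ^ card K * (2 ^ card K * HS K Ob)" by (simp add: sum_distrib_left[symmetric] r2)
  also have "\<dots> = 6 ^ card K * HS K Ob" by (simp add: power_mult_distrib[symmetric])
  finally show ?thesis using r1 by simp
qed




lemma fact_bound: "2 * 3 ^ n \<le> (fact (n + 2) :: real)"
proof (induction n)
  case 0 thus ?case by simp
next
  case (Suc n)
  have A: "(fact (Suc n + 2) :: real) = (of_nat (n + 3)) * fact (n + 2)"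
    by (simp add: fact_Suc add.commute)
  have B: "(of_nat (n + 3)) * fact (n + 2) \<ge> 3 * (fact (n + 2) :: real)" by (intro mult_right_mono) auto
  have C: "3 * (fact (n + 2) :: real) \<ge> 3 * (2 * 3 ^ n)" using Suc.IH by linarith
  have D: "(2 * 3 ^ Suc n :: real) = 3 * (2 * 3 ^ n)" by simp
  show ?case using A B C D by linarith
qed

lemma exp_pos_bound:
  fixes z :: real
  assumes z0: "0 \<le> z" and z3: "z < 3"
  shows "exp z \<le> 1 + z + z\<^sup>2 / (2 * (1 - z / 3))"
proof -
  define c where "c n = z\<^sup>2 / 2 * (z / 3) ^ n" for n
  have cs: "c sums (z\<^sup>2 / 2 * (1 / (1 - z / 3)))"
    unfolding c_def by (rule sums_mult, rule geometric_sums) (use z0 z3 in simp)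
  define b where "b n = (if n < 2 then z ^ n / fact n else c (n - 2))" for n
  have "(\<lambda>n. b (n + 2)) = c" unfolding b_def by auto
  hence "(\<lambda>n. b (n + 2)) sums (z\<^sup>2 / 2 * (1 / (1 - z / 3)))" using cs by simp
  hence bs: "b sums (z\<^sup>2 / 2 * (1 / (1 - z / 3)) + (\<Sum>i<2. b i))" by (simp only: sums_iff_shift)
  have s2: "(\<Sum>i<2. b i) = 1 + z" unfolding b_def by (simp add: numeral_2_eq_2)
  have es: "(\<lambda>n. z ^ n / fact n) sums exp z" using exp_converges[of z] by (simp add: divide_inverse mult.commute)
  have le: "z ^ n / fact n \<le> b n" for n
  proof (cases "n < 2")
    case True thus ?thesis unfolding b_def by simp
  next
    case False
    then obtain m where m: "n = m + 2" by (metis add.commute le_Suc_ex not_less)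
    have "z ^ n / fact n \<le> z ^ n / (2 * 3 ^ m)"
      by (rule divide_left_mono) (use z0 fact_bound[of m] m in auto)
    also have "\<dots> = c m" unfolding c_def m by (simp add: power_add power_divide field_simps power2_eq_square)
    finally show ?thesis unfolding b_def using False m by simp
  qed
  have "exp z \<le> z\<^sup>2 / 2 * (1 / (1 - z / 3)) + (1 + z)"
    using sums_le[OF le es bs] s2 by simp
  thus ?thesis by (simp add: field_simps)
qed

lemma exp_neg_bound:
  fixes z :: real
  assumes "z \<le> 0"
  shows "exp z \<le> 1 + z + z\<^sup>2 / 2"
proof -
  define f where "f y = exp y - 1 - y - y\<^sup>2 / 2" for y :: real
  have "f z \<le> f 0"
  proof (rule DERIV_nonneg_imp_nondecreasing[OF assms])
    fix y :: real
    have "DERIV f y :> exp y - 1 - y"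
      unfolding f_def by (auto intro!: derivative_eq_intros)
    moreover have "exp y - 1 - y \<ge> 0" using exp_ge_add_one_self[of y] by linarith
    ultimately show "\<exists>d. DERIV f y :> d \<and> 0 \<le> d" by blast
  qed
  thus ?thesis unfolding f_def by simp
qed

lemma exp_bern:
  fixes z c :: real
  assumes zc: "z \<le> c" and c0: "0 \<le> c" and c3: "c < 3"
  shows "exp z \<le> 1 + z + z\<^sup>2 / (2 * (1 - c / 3))"
proof (cases "z \<le> 0")
  case True
  have "z\<^sup>2 / 2 \<le> z\<^sup>2 / (2 * (1 - c / 3))"
    by (rule divide_left_mono) (use c0 c3 in auto)
  thus ?thesis using exp_neg_bound[OF True] by linarith
next
  case False
  have "z\<^sup>2 / (2 * (1 - z / 3)) \<le> z\<^sup>2 / (2 * (1 - c / 3))"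
    by (rule divide_left_mono) (use zc c3 False in auto)
  thus ?thesis using exp_pos_bound[of z] False zc c3 by simp
qed

lemma mgf_bound:
  fixes p x :: "'s \<Rightarrow> real"
  assumes S: "finite S" and p0: "\<And>s. s \<in> S \<Longrightarrow> p s \<ge> 0" and p1: "(\<Sum>s\<in>S. p s) = 1"
    and xB: "\<And>s. s \<in> S \<Longrightarrow> x s \<le> B" and wB: "(\<Sum>s\<in>S. p s * (x s)\<^sup>2) \<le> B"
    and t0: "0 \<le> t" and B0: "0 \<le> B" and tB: "t * B < 3"
  shows "(\<Sum>s\<in>S. p s * exp (t * x s)) \<le> exp (t * (\<Sum>s\<in>S. p s * x s) + t\<^sup>2 * B / (2 * (1 - t * B / 3)))"
proof -
  define D where "D = 2 * (1 - t * B / 3)"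
  have D0: "D > 0" unfolding D_def using tB by (simp add: field_simps)
  have tB': "B * t < 3" using tB by (metis mult.commute)
  have "(\<Sum>s\<in>S. p s * exp (t * x s)) \<le> (\<Sum>s\<in>S. p s * (1 + t * x s + (t * x s)\<^sup>2 / D))"
  proof (rule sum_mono)
    fix s assume s: "s \<in> S"
    have "t * x s \<le> t * B" using xB[OF s] t0 by (simp add: mult_left_mono)
    hence "exp (t * x s) \<le> 1 + t * x s + (t * x s)\<^sup>2 / D"
      unfolding D_def by (rule exp_bern) (use t0 B0 tB tB' in auto)
    thus "p s * exp (t * x s) \<le> p s * (1 + t * x s + (t * x s)\<^sup>2 / D)"
      using p0[OF s] by (simp add: mult_left_mono)
  qed
  also have "\<dots> = 1 + t * (\<Sum>s\<in>S. p s * x s) + t\<^sup>2 / D * (\<Sum>s\<in>S. p s * (x s)\<^sup>2)"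
    using p1 by (simp add: sum.distrib sum_distrib_left algebra_simps power_mult_distrib)
  also have "\<dots> \<le> 1 + t * (\<Sum>s\<in>S. p s * x s) + t\<^sup>2 / D * B"
  proof -
    have "t\<^sup>2 / D * (\<Sum>s\<in>S. p s * (x s)\<^sup>2) \<le> t\<^sup>2 / D * B"
      using wB D0 by (intro mult_left_mono) auto
    thus ?thesis by linarith
  qed
  also have "\<dots> \<le> exp (t * (\<Sum>s\<in>S. p s * x s) + t\<^sup>2 * B / D)"
  proof -
    have e: "t\<^sup>2 / D * B = t\<^sup>2 * B / D" by simp
    show ?thesis using exp_ge_add_one_self[of "t * (\<Sum>s\<in>S. p s * x s) + t\<^sup>2 * B / D"] e by linarith
  qed
  finally show ?thesis unfolding D_def .
qed


lemma chernoff_alg: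
  fixes B \<epsilon> :: real
  assumes B0: "B > 0" and e0: "\<epsilon> > 0"
  defines "t \<equiv> \<epsilon> / (B * (1 + \<epsilon> / 3))"
  shows "- t * \<epsilon> + t\<^sup>2 * B / (2 * (1 - t * B / 3)) = - (\<epsilon>\<^sup>2 / (2 * B * (1 + \<epsilon> / 3)))"
    and "t * B < 3" and "t \<ge> 0"
proof -
  define c where "c = 1 + \<epsilon> / 3"
  have c0: "c > 0" unfolding c_def using e0 by simp
  have tc: "t = \<epsilon> / (B * c)" unfolding t_def c_def ..
  have tB: "t * B = \<epsilon> / c" unfolding tc using B0 c0 by simp
  have d: "1 - t * B / 3 = 1 / c" unfolding tB c_def using e0 by (simp add: field_simps)
  show "- t * \<epsilon> + t\<^sup>2 * B / (2 * (1 - t * B / 3)) = - (\<epsilon>\<^sup>2 / (2 * B * (1 + \<epsilon> / 3)))"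
    unfolding d c_def[symmetric] unfolding tc using B0 c0 by (simp add: field_simps power2_eq_square)
  show "t * B < 3" unfolding tB c_def using e0 by (simp add: field_simps)
  show "t \<ge> 0" unfolding t_def using B0 e0 by simp
qed

lemma chernoff:
  fixes p x :: "'s \<Rightarrow> real" and M :: nat
  assumes S: "finite S" and p0: "\<And>s. s \<in> S \<Longrightarrow> p s \<ge> 0" and p1: "(\<Sum>s\<in>S. p s) = 1"
    and xB: "\<And>s. s \<in> S \<Longrightarrow> x s \<le> B" and wB: "(\<Sum>s\<in>S. p s * (x s)\<^sup>2) \<le> B"
    and B0: "B > 0" and e0: "\<epsilon> > 0"
  shows "(\<Sum>\<omega>\<in>{0..<M} \<rightarrow>\<^sub>E S. if real M * ((\<Sum>s\<in>S. p s * x s) + \<epsilon>) \<le> (\<Sum>m<M. x (\<omega> m))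
            then (\<Prod>m<M. p (\<omega> m)) else 0) \<le> exp (- (real M * (\<epsilon>\<^sup>2 / (2 * B * (1 + \<epsilon> / 3)))))"
proof -
  define \<mu> where "\<mu> = (\<Sum>s\<in>S. p s * x s)"
  define t where "t = \<epsilon> / (B * (1 + \<epsilon> / 3))"
  define a where "a = \<epsilon>\<^sup>2 / (2 * B * (1 + \<epsilon> / 3))"
  note alg = chernoff_alg[OF B0 e0, folded t_def]
  define g where "g s = p s * exp (t * (x s - \<mu> - \<epsilon>))" for s
  have step1: "(if real M * (\<mu> + \<epsilon>) \<le> (\<Sum>m<M. x (\<omega> m)) then (\<Prod>m<M. p (\<omega> m)) else 0)
      \<le> (\<Prod>m\<in>{0..<M}. g (\<omega> m))" if w: "\<omega> \<in> {0..<M} \<rightarrow>\<^sub>E S" for \<omega>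
  proof -
    have pp: "(\<Prod>m<M. p (\<omega> m)) \<ge> 0" using w p0 by (intro prod_nonneg) (auto simp: PiE_iff)
    have "(\<Prod>m\<in>{0..<M}. g (\<omega> m)) = (\<Prod>m<M. p (\<omega> m)) * (\<Prod>m<M. exp (t * (x (\<omega> m) - \<mu> - \<epsilon>)))"
      unfolding g_def by (simp add: prod.distrib atLeast0LessThan)
    also have "(\<Prod>m<M. exp (t * (x (\<omega> m) - \<mu> - \<epsilon>))) = exp (\<Sum>m<M. t * (x (\<omega> m) - \<mu> - \<epsilon>))"
      by (simp add: exp_sum)
    also have "(\<Sum>m<M. t * (x (\<omega> m) - \<mu> - \<epsilon>)) = t * ((\<Sum>m<M. x (\<omega> m)) - real M * (\<mu> + \<epsilon>))"
      by (simp add: sum_distrib_left[symmetric] sum_subtractf algebra_simps)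
    finally have eq: "(\<Prod>m\<in>{0..<M}. g (\<omega> m)) = (\<Prod>m<M. p (\<omega> m)) * exp (t * ((\<Sum>m<M. x (\<omega> m)) - real M * (\<mu> + \<epsilon>)))" .
    show ?thesis
    proof (cases "real M * (\<mu> + \<epsilon>) \<le> (\<Sum>m<M. x (\<omega> m))")
      case True
      hence "t * ((\<Sum>m<M. x (\<omega> m)) - real M * (\<mu> + \<epsilon>)) \<ge> 0" using alg(3) by simp
      hence "exp (t * ((\<Sum>m<M. x (\<omega> m)) - real M * (\<mu> + \<epsilon>))) \<ge> 1" by simp
      hence "(\<Prod>m<M. p (\<omega> m)) * 1 \<le> (\<Prod>m<M. p (\<omega> m)) * exp (t * ((\<Sum>m<M. x (\<omega> m)) - real M * (\<mu> + \<epsilon>)))"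
        using pp by (intro mult_left_mono) auto
      thus ?thesis using True eq by simp
    next
      case False
      thus ?thesis using eq pp by simp
    qed
  qed
  have "(\<Sum>\<omega>\<in>{0..<M} \<rightarrow>\<^sub>E S. if real M * (\<mu> + \<epsilon>) \<le> (\<Sum>m<M. x (\<omega> m)) then (\<Prod>m<M. p (\<omega> m)) else 0)
     \<le> (\<Sum>\<omega>\<in>{0..<M} \<rightarrow>\<^sub>E S. \<Prod>m\<in>{0..<M}. g (\<omega> m))"
    by (rule sum_mono) (rule step1)
  also have "\<dots> = (\<Prod>m\<in>{0..<M}. \<Sum>s\<in>S. g s)"
    using prod_sum_PiE[of "{0..<M}" "\<lambda>_. S" "\<lambda>m s. g s"] S by simp
  also have "\<dots> = (\<Sum>s\<in>S. g s) ^ M" by simp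
  also have "\<dots> \<le> exp (- a) ^ M"
  proof (rule power_mono)
    show "0 \<le> (\<Sum>s\<in>S. g s)" unfolding g_def using p0 by (intro sum_nonneg) auto
    have "(\<Sum>s\<in>S. g s) = exp (- t * (\<mu> + \<epsilon>)) * (\<Sum>s\<in>S. p s * exp (t * x s))"
      unfolding g_def by (simp add: sum_distrib_left algebra_simps exp_add[symmetric] exp_diff)
    also have "\<dots> \<le> exp (- t * (\<mu> + \<epsilon>)) * exp (t * \<mu> + t\<^sup>2 * B / (2 * (1 - t * B / 3)))"
      using mgf_bound[OF S p0 p1 xB wB alg(3) _ alg(2)] B0 unfolding \<mu>_def by simp
    also have "\<dots> = exp (- t * \<epsilon> + t\<^sup>2 * B / (2 * (1 - t * B / 3)))"
      by (simp add: exp_add[symmetric] algebra_simps)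
    also have "\<dots> = exp (- a)" unfolding alg(1) a_def ..
    finally show "(\<Sum>s\<in>S. g s) \<le> exp (- a)" .
  qed
  also have "\<dots> = exp (- (real M * a))" by (simp add: exp_of_nat_mult[symmetric])
  finally show ?thesis unfolding \<mu>_def a_def .
qed




lemma FK_dep:
  assumes "\<And>n. n \<in> K \<Longrightarrow> s n = t n"
  shows "FK \<psi> K Ob s = FK \<psi> K Ob t"
  unfolding FK_def using assms by (intro sum.cong refl prod.cong) auto

lemma second_moment:
  assumes sic: "is_qubit_SIC \<psi>" and d: "density_matrix N \<rho>" and K: "K \<subseteq> {..<N}"
  shows "(\<Sum>s\<in>outcome_strings N. outcome_prob \<psi> N \<rho> s * (cmod (FK \<psi> K Ob s))\<^sup>2) \<le> 3 ^ card K * HS K Ob"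
proof -
  have fK: "finite K" using K finite_subset by blast
  let ?T = "PiE K (\<lambda>_. {..<4::nat})"
  let ?OS = "outcome_strings N"
  define h where "h t = (cmod (FK \<psi> K Ob t))\<^sup>2" for t
  define p where "p s = outcome_prob \<psi> N \<rho> s" for s
  have hr: "h s = h (restrict s K)" for s unfolding h_def by (subst FK_dep[of K s "restrict s K"]) auto
  have img: "(\<lambda>s. restrict s K) ` ?OS \<subseteq> ?T"
    using K unfolding outcome_strings_def by (auto simp: PiE_iff)
  have finT: "finite ?T" using fK by (simp add: finite_PiE)
  have "(\<Sum>s\<in>?OS. p s * h s) = (\<Sum>s\<in>?OS. p s * h (restrict s K))"
    by (intro sum.cong refl) (simp only: hr[symmetric])
  also have "\<dots> = (\<Sum>t\<in>?T. \<Sum>s\<in>{s\<in>?OS. restrict s K = t}. p s * h (restrict s K))"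
    by (rule sum.group[symmetric, OF finite_OS finT img])
  also have "\<dots> = (\<Sum>t\<in>?T. h t * (\<Sum>s\<in>{s\<in>?OS. restrict s K = t}. p s))"
    by (intro sum.cong refl) (auto simp: sum_distrib_left mult.commute)
  also have "\<dots> \<le> (\<Sum>t\<in>?T. h t * (1 / 2 ^ card K))"
  proof (rule sum_mono)
    fix t assume t: "t \<in> ?T"
    show "h t * (\<Sum>s\<in>{s\<in>?OS. restrict s K = t}. p s) \<le> h t * (1 / 2 ^ card K)"
      unfolding p_def h_def by (rule mult_left_mono[OF fiber_bound[OF sic d K t]]) simp
  qed
  also have "\<dots> = (\<Sum>t\<in>?T. h t) / 2 ^ card K" by (simp add: sum_divide_distrib)
  also have "\<dots> \<le> 6 ^ card K * HS K Ob / 2 ^ card K"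
    unfolding h_def by (rule divide_right_mono[OF FK_sum_bound[OF sic fK]]) simp
  also have "\<dots> = 3 ^ card K * HS K Ob"
  proof -
    have "(6::real) ^ card K = 3 ^ card K * 2 ^ card K" by (simp add: power_mult_distrib[symmetric])
    thus ?thesis by simp
  qed
  finally show ?thesis unfolding p_def h_def .
qed

lemma unbiased_trace:
  assumes sic: "is_qubit_SIC \<psi>" and d: "density_matrix N \<rho>"
  shows "(\<Sum>s\<in>outcome_strings N. complex_of_real (outcome_prob \<psi> N \<rho> s) *
            qtrace {0..<N} (qmult {0..<N} A (sic_shadow \<psi> N s))) = qtrace {0..<N} (qmult {0..<N} A \<rho>)"
proof -
  let ?Q = "qbasis {0..<N}"
  define c where "c s = complex_of_real (outcome_prob \<psi> N \<rho> s)" for s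
  have "(\<Sum>s\<in>outcome_strings N. c s * qtrace {0..<N} (qmult {0..<N} A (sic_shadow \<psi> N s)))
      = (\<Sum>s\<in>outcome_strings N. \<Sum>x\<in>?Q. \<Sum>z\<in>?Q. A x z * (c s * sic_shadow \<psi> N s z x))"
    unfolding qtrace_def qmult_def by (simp add: sum_distrib_left mult_ac)
  also have "\<dots> = (\<Sum>x\<in>?Q. \<Sum>s\<in>outcome_strings N. \<Sum>z\<in>?Q. A x z * (c s * sic_shadow \<psi> N s z x))"
    by (rule sum.swap)
  also have "\<dots> = (\<Sum>x\<in>?Q. \<Sum>z\<in>?Q. \<Sum>s\<in>outcome_strings N. A x z * (c s * sic_shadow \<psi> N s z x))"
    by (rule sum.cong[OF refl], rule sum.swap)
  also have "\<dots> = (\<Sum>x\<in>?Q. \<Sum>z\<in>?Q. A x z * \<rho> z x)"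
  proof (intro sum.cong refl)
    fix x z assume x: "x \<in> ?Q" and z: "z \<in> ?Q"
    have "(\<Sum>s\<in>outcome_strings N. A x z * (c s * sic_shadow \<psi> N s z x)) = A x z * (\<Sum>s\<in>outcome_strings N. c s * sic_shadow \<psi> N s z x)"
      by (simp add: sum_distrib_left)
    also have "\<dots> = A x z * \<rho> z x" unfolding c_def using unbiased_entry[OF sic d x z] by simp
    finally show "(\<Sum>s\<in>outcome_strings N. A x z * (c s * sic_shadow \<psi> N s z x)) = A x z * \<rho> z x" .
  qed
  also have "\<dots> = qtrace {0..<N} (qmult {0..<N} A \<rho>)" unfolding qtrace_def qmult_def ..
  finally show ?thesis unfolding c_def .
qed

lemma total_prob:
  fixes M :: nat
  assumes S: "finite S" and p1: "(\<Sum>s\<in>S. p s) = (1::real)"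
  shows "(\<Sum>\<omega>\<in>{0..<M} \<rightarrow>\<^sub>E S. \<Prod>m<M. p (\<omega> m)) = 1"
proof -
  have "(\<Sum>\<omega>\<in>{0..<M} \<rightarrow>\<^sub>E S. \<Prod>m\<in>{0..<M}. p (\<omega> m)) = (\<Prod>m\<in>{0..<M}. \<Sum>s\<in>S. p s)"
    by (rule prod_sum_PiE[symmetric]) (auto simp: S)
  thus ?thesis using p1 by (simp add: atLeast0LessThan)
qed


lemma FK_is_real:
  assumes h: "hermitian_on K Ob"
  shows "FK \<psi> K Ob t = complex_of_real (Re (FK \<psi> K Ob t))"
proof -
  have "Im (FK \<psi> K Ob t) = 0"
  proof -
    have "Im (cnj (FK \<psi> K Ob t)) = Im (FK \<psi> K Ob t)" using FK_real[OF h, of \<psi> t] by simp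
    thus ?thesis by simp
  qed
  thus ?thesis by (simp add: complex_eq_iff)
qed

lemma tails:
  fixes M :: nat and Ob :: qop
  assumes sic: "is_qubit_SIC \<psi>" and d: "density_matrix N \<rho>" and K: "K \<subseteq> {..<N}"
    and h: "hermitian_on K Ob" and T5: "HS K Ob \<ge> (5/9) ^ card K" and e0: "\<epsilon> > 0"
  defines "x \<equiv> \<lambda>s. Re (FK \<psi> K Ob s)"
    and "B \<equiv> 3 ^ card K * HS K Ob"
  shows "(\<Sum>\<omega>\<in>{0..<M} \<rightarrow>\<^sub>E outcome_strings N.
            if real M * ((\<Sum>s\<in>outcome_strings N. outcome_prob \<psi> N \<rho> s * x s) + \<epsilon>) \<le> (\<Sum>m<M. x (\<omega> m))
            then (\<Prod>m<M. outcome_prob \<psi> N \<rho> (\<omega> m)) else 0) \<le> exp (- (real M * (\<epsilon>\<^sup>2 / (2 * B * (1 + \<epsilon> / 3)))))"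
    and "(\<Sum>\<omega>\<in>{0..<M} \<rightarrow>\<^sub>E outcome_strings N.
            if real M * ((\<Sum>s\<in>outcome_strings N. outcome_prob \<psi> N \<rho> s * (- x s)) + \<epsilon>) \<le> (\<Sum>m<M. - x (\<omega> m))
            then (\<Prod>m<M. outcome_prob \<psi> N \<rho> (\<omega> m)) else 0) \<le> exp (- (real M * (\<epsilon>\<^sup>2 / (2 * B * (1 + \<epsilon> / 3)))))"
    and "B > 0"
proof -
  have fK: "finite K" using K finite_subset by blast
  have HS0: "HS K Ob > 0"
  proof -
    have "(0::real) < (5/9) ^ card K" by simp
    thus ?thesis using T5 by linarith
  qed
  show B0: "B > 0" unfolding B_def using HS0 by simp
  have xsq: "(x s)\<^sup>2 = (cmod (FK \<psi> K Ob s))\<^sup>2" for s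
  proof -
    have "cmod (FK \<psi> K Ob s) = \<bar>x s\<bar>" unfolding x_def by (subst FK_is_real[OF h]) (simp only: norm_of_real)
    thus ?thesis by simp
  qed
  have xabs: "\<bar>x s\<bar> \<le> B" if s: "s \<in> outcome_strings N" for s
  proof -
    have st: "s n < 4" if "n \<in> K" for n
    proof -
      have "n \<in> {0..<N}" using K that by auto
      thus ?thesis using s unfolding outcome_strings_def by (auto simp: PiE_iff)
    qed
    have "(x s)\<^sup>2 \<le> HS K Ob * 5 ^ card K" unfolding xsq by (rule FK_bound_sq[OF sic fK st])
    also have "\<dots> \<le> B\<^sup>2"
    proof -
      have "(5::real) ^ card K = 9 ^ card K * (5/9) ^ card K" by (simp add: power_mult_distrib[symmetric])
      also have "\<dots> \<le> 9 ^ card K * HS K Ob" using T5 by (intro mult_left_mono) auto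
      finally have "HS K Ob * 5 ^ card K \<le> HS K Ob * (9 ^ card K * HS K Ob)" using HS0 by (intro mult_left_mono) auto
      also have "\<dots> = B\<^sup>2" unfolding B_def by (simp add: power2_eq_square power_mult_distrib[symmetric])
      finally show ?thesis .
    qed
    finally have "(x s)\<^sup>2 \<le> B\<^sup>2" .
    hence "\<bar>x s\<bar> \<le> \<bar>B\<bar>" by (simp only: abs_le_square_iff)
    thus ?thesis using B0 by simp
  qed
  have w: "(\<Sum>s\<in>outcome_strings N. outcome_prob \<psi> N \<rho> s * (x s)\<^sup>2) \<le> B"
    unfolding xsq B_def by (rule second_moment[OF sic d K])
  have p0: "\<And>s. s \<in> outcome_strings N \<Longrightarrow> outcome_prob \<psi> N \<rho> s \<ge> 0" using prob_nonneg[OF d] by blast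
  show "(\<Sum>\<omega>\<in>{0..<M} \<rightarrow>\<^sub>E outcome_strings N.
            if real M * ((\<Sum>s\<in>outcome_strings N. outcome_prob \<psi> N \<rho> s * x s) + \<epsilon>) \<le> (\<Sum>m<M. x (\<omega> m))
            then (\<Prod>m<M. outcome_prob \<psi> N \<rho> (\<omega> m)) else 0) \<le> exp (- (real M * (\<epsilon>\<^sup>2 / (2 * B * (1 + \<epsilon> / 3)))))"
  proof -
    have xB: "\<And>s. s \<in> outcome_strings N \<Longrightarrow> x s \<le> B" using xabs by (simp add: abs_le_iff)
    show ?thesis by (rule chernoff[OF finite_OS p0 prob_sum[OF sic d] xB w B0 e0])
  qed
  show "(\<Sum>\<omega>\<in>{0..<M} \<rightarrow>\<^sub>E outcome_strings N.
            if real M * ((\<Sum>s\<in>outcome_strings N. outcome_prob \<psi> N \<rho> s * (- x s)) + \<epsilon>) \<le> (\<Sum>m<M. - x (\<omega> m))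
            then (\<Prod>m<M. outcome_prob \<psi> N \<rho> (\<omega> m)) else 0) \<le> exp (- (real M * (\<epsilon>\<^sup>2 / (2 * B * (1 + \<epsilon> / 3)))))"
  proof -
    have xB: "\<And>s. s \<in> outcome_strings N \<Longrightarrow> - x s \<le> B" using xabs by (simp add: abs_le_iff)
    have w2: "(\<Sum>s\<in>outcome_strings N. outcome_prob \<psi> N \<rho> s * (- x s)\<^sup>2) \<le> B" using w by simp
    show ?thesis by (rule chernoff[OF finite_OS p0 prob_sum[OF sic d] xB w2 B0 e0])
  qed
qed




theorem mainTheorem2:
  fixes N L K M :: nat and \<rho> :: qop and \<psi> :: "nat \<Rightarrow> bool \<Rightarrow> complex"
    and OK :: "nat \<Rightarrow> qop" and Ks :: "nat \<Rightarrow> nat set" and \<epsilon> \<delta> :: real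
  assumes sic: "is_qubit_SIC \<psi>"
    and rho: "density_matrix N \<rho>"
    and L: "L \<ge> 1"
    and loc: "\<forall>l<L. Ks l \<subseteq> {0..<N} \<and> card (Ks l) \<le> K \<and> hermitian_on (Ks l) (OK l)"
    and tr2: "\<forall>l<L. Re (qtrace (Ks l) (qmult (Ks l) (OK l) (OK l))) \<ge> (5/9) ^ card (Ks l)"
    and eps: "0 < \<epsilon>" "\<epsilon> < 1"
    and del: "0 < \<delta>" "\<delta> < 1"
    and M: "real M \<ge> 8/3 * 3 ^ K
              * (MAX l\<in>{0..<L}. Re (qtrace (Ks l) (qmult (Ks l) (OK l) (OK l))))
              * ln (2 * real L / \<delta>) / \<epsilon>\<^sup>2"
  shows "shadows_prob \<psi> N \<rho> M
           (\<lambda>\<omega>. \<forall>l<L. cmod ((\<Sum>m<M. qtrace {0..<N}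
                     (qmult {0..<N} (extend_local N (Ks l) (OK l)) (sic_shadow \<psi> N (\<omega> m)))) / of_nat M
                   - qtrace {0..<N} (qmult {0..<N} (extend_local N (Ks l) (OK l)) \<rho>)) \<le> \<epsilon>)
         \<ge> 1 - \<delta>"
proof -
  let ?OS = "outcome_strings N"
  define p where "p s = outcome_prob \<psi> N \<rho> s" for s
  define x where "x l s = Re (FK \<psi> (Ks l) (OK l) s)" for l s
  define mr where "mr l = (\<Sum>s\<in>?OS. p s * x l s)" for l
  define B where "B l = 3 ^ card (Ks l) * HS (Ks l) (OK l)" for l
  define Tr where "Tr l = Re (qtrace (Ks l) (qmult (Ks l) (OK l) (OK l)))" for l
  define Tm where "Tm = (MAX l\<in>{0..<L}. Re (qtrace (Ks l) (qmult (Ks l) (OK l) (OK l))))"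
  define a where "a l = exp (- (real M * (\<epsilon>\<^sup>2 / (2 * B l * (1 + \<epsilon> / 3)))))" for l
  define P where "P \<omega> = (\<Prod>m<M. p (\<omega> m))" for \<omega> :: "nat \<Rightarrow> nat \<Rightarrow> nat"
  define U where "U l \<omega> = (real M * (mr l + \<epsilon>) \<le> (\<Sum>m<M. x l (\<omega> m)))" for l \<omega>
  define D where "D l \<omega> = (real M * ((\<Sum>s\<in>?OS. p s * (- x l s)) + \<epsilon>) \<le> (\<Sum>m<M. - x l (\<omega> m)))" for l \<omega>
  define Ev where "Ev = (\<lambda>\<omega>. \<forall>l<L. cmod ((\<Sum>m<M. qtrace {0..<N}
                     (qmult {0..<N} (extend_local N (Ks l) (OK l)) (sic_shadow \<psi> N (\<omega> m)))) / of_nat M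
                   - qtrace {0..<N} (qmult {0..<N} (extend_local N (Ks l) (OK l)) \<rho>)) \<le> \<epsilon>)"
  let ?W = "{0..<M} \<rightarrow>\<^sub>E ?OS"
  have Kl: "Ks l \<subseteq> {..<N}" if "l < L" for l
  proof -
    have "Ks l \<subseteq> {0..<N}" using loc that by blast
    thus ?thesis by (simp only: I_eq)
  qed
  have hl: "hermitian_on (Ks l) (OK l)" if "l < L" for l using loc that by auto
  have cardK: "card (Ks l) \<le> K" if "l < L" for l using loc that by auto
  have HSl: "Tr l = HS (Ks l) (OK l)" if "l < L" for l unfolding Tr_def using HS_trace[OF hl[OF that]] .
  have T5: "HS (Ks l) (OK l) \<ge> (5/9) ^ card (Ks l)" if "l < L" for l
    using tr2 that HSl[OF that] unfolding Tr_def by auto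
  have tU: "(\<Sum>\<omega>\<in>?W. if U l \<omega> then P \<omega> else 0) \<le> a l" if "l < L" for l
    using tails(1)[OF sic rho Kl[OF that] hl[OF that] T5[OF that] eps(1), of M]
    unfolding U_def P_def a_def B_def mr_def x_def p_def by simp
  have tD: "(\<Sum>\<omega>\<in>?W. if D l \<omega> then P \<omega> else 0) \<le> a l" if "l < L" for l
    using tails(2)[OF sic rho Kl[OF that] hl[OF that] T5[OF that] eps(1), of M]
    unfolding D_def P_def a_def B_def mr_def x_def p_def by simp
  have Bpos: "B l > 0" if "l < L" for l
    using tails(3)[OF sic rho Kl[OF that] hl[OF that] T5[OF that] eps(1)] unfolding B_def by simp
  have finL: "finite ((\<lambda>l. Tr l) ` {0..<L})" by simp
  have TrTm: "Tr l \<le> Tm" if "l < L" for l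
    unfolding Tm_def Tr_def[symmetric] using that by (intro Max_ge) auto
  have Tr0: "Tr 0 > 0"
  proof -
    have "(0::real) < (5/9) ^ card (Ks 0)" by simp
    moreover have L0: "0 < L" using L by simp
    ultimately show ?thesis using T5[OF L0] HSl[OF L0] by linarith
  qed
  have Tm0: "Tm > 0"
  proof -
    have L0: "0 < L" using L by simp
    show ?thesis using Tr0 TrTm[OF L0] by linarith
  qed
  have BTm: "B l \<le> 3 ^ K * Tm" if "l < L" for l
  proof -
    have "B l = 3 ^ card (Ks l) * Tr l" unfolding B_def HSl[OF that] ..
    also have "\<dots> \<le> 3 ^ K * Tm"
    proof (rule mult_mono)
      show "(3::real) ^ card (Ks l) \<le> 3 ^ K" using cardK[OF that] by (simp add: power_increasing)
      show "Tr l \<le> Tm" using TrTm[OF that] .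
      show "(0::real) \<le> 3 ^ K" by simp
      show "0 \<le> Tr l" using Bpos[OF that] unfolding B_def HSl[OF that, symmetric]
        by (simp add: zero_less_mult_iff)
    qed
    finally show ?thesis .
  qed
  have Mb: "real M \<ge> 8/3 * 3 ^ K * Tm * ln (2 * real L / \<delta>) / \<epsilon>\<^sup>2" using M unfolding Tm_def .
  have ln0: "ln (2 * real L / \<delta>) > 0"
  proof -
    have "2 * real L / \<delta> > 1" using L del by (simp add: field_simps)
    thus ?thesis by simp
  qed
  define Q where "Q = 8/3 * 3 ^ K * Tm"
  have Q0: "Q > 0" unfolding Q_def using Tm0 by simp
  have MQ: "real M * \<epsilon>\<^sup>2 \<ge> Q * ln (2 * real L / \<delta>)"
  proof -
    have "Q * ln (2 * real L / \<delta>) / \<epsilon>\<^sup>2 \<le> real M" using Mb unfolding Q_def by simp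
    thus ?thesis using eps by (simp add: field_simps)
  qed
  have Mpos: "real M > 0"
  proof -
    have "Q * ln (2 * real L / \<delta>) > 0" using Q0 ln0 by simp
    hence "real M * \<epsilon>\<^sup>2 > 0" using MQ by linarith
    thus ?thesis using eps by (simp add: zero_less_mult_iff)
  qed
  have al: "a l \<le> \<delta> / (2 * real L)" if "l < L" for l
  proof -
    define den where "den = 2 * B l * (1 + \<epsilon> / 3)"
    have den0: "den > 0" unfolding den_def using Bpos[OF that] eps by simp
    have denQ: "den \<le> Q"
    proof -
      have "den \<le> 2 * (3 ^ K * Tm) * (4/3)" unfolding den_def
        using BTm[OF that] Bpos[OF that] eps by (intro mult_mono) auto
      thus ?thesis unfolding Q_def by simp
    qed
    have "ln (2 * real L / \<delta>) \<le> real M * \<epsilon>\<^sup>2 / Q" using MQ Q0 by (simp add: field_simps)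
    also have "\<dots> \<le> real M * \<epsilon>\<^sup>2 / den"
      using denQ den0 Mpos by (intro divide_left_mono) auto
    also have "\<dots> = real M * (\<epsilon>\<^sup>2 / den)" by simp
    finally have "- (real M * (\<epsilon>\<^sup>2 / den)) \<le> - ln (2 * real L / \<delta>)" by simp
    hence "a l \<le> exp (- ln (2 * real L / \<delta>))" unfolding a_def den_def by simp
    also have "\<dots> = \<delta> / (2 * real L)"
      using L del by (simp add: exp_minus ln_div exp_diff)
    finally show ?thesis .
  qed
  have Xf: "qtrace {0..<N} (qmult {0..<N} (extend_local N (Ks l) (OK l)) (sic_shadow \<psi> N s)) = complex_of_real (x l s)"
    if "l < L" "s \<in> ?OS" for l s
    unfolding X_factor[OF sic Kl[OF that(1)] that(2)] x_def by (rule FK_is_real[OF hl[OF that(1)]])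
  have muf: "qtrace {0..<N} (qmult {0..<N} (extend_local N (Ks l) (OK l)) \<rho>) = complex_of_real (mr l)"
    if "l < L" for l
  proof -
    have "qtrace {0..<N} (qmult {0..<N} (extend_local N (Ks l) (OK l)) \<rho>)
      = (\<Sum>s\<in>?OS. complex_of_real (p s) * qtrace {0..<N} (qmult {0..<N} (extend_local N (Ks l) (OK l)) (sic_shadow \<psi> N s)))"
      unfolding p_def by (rule unbiased_trace[OF sic rho, symmetric])
    also have "\<dots> = (\<Sum>s\<in>?OS. complex_of_real (p s * x l s))"
      by (intro sum.cong refl) (simp add: Xf[OF that])
    also have "\<dots> = complex_of_real (mr l)" unfolding mr_def by simp
    finally show ?thesis .
  qed
  have bad: "\<exists>l<L. U l \<omega> \<or> D l \<omega>" if w: "\<omega> \<in> ?W" and ne: "\<not> Ev \<omega>" for \<omega>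
  proof -
    obtain l where l: "l < L" and c: "\<not> cmod ((\<Sum>m<M. qtrace {0..<N}
                     (qmult {0..<N} (extend_local N (Ks l) (OK l)) (sic_shadow \<psi> N (\<omega> m)))) / of_nat M
                   - qtrace {0..<N} (qmult {0..<N} (extend_local N (Ks l) (OK l)) \<rho>)) \<le> \<epsilon>"
      using ne unfolding Ev_def by blast
    have wm: "\<omega> m \<in> ?OS" if "m < M" for m using w that by (auto simp: PiE_iff)
    define S where "S = (\<Sum>m<M. x l (\<omega> m))"
    have "(\<Sum>m<M. qtrace {0..<N} (qmult {0..<N} (extend_local N (Ks l) (OK l)) (sic_shadow \<psi> N (\<omega> m))))
        = complex_of_real S"
      unfolding S_def of_real_sum by (intro sum.cong refl) (simp add: Xf[OF l wm])
    hence "cmod ((\<Sum>m<M. qtrace {0..<N}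
                     (qmult {0..<N} (extend_local N (Ks l) (OK l)) (sic_shadow \<psi> N (\<omega> m)))) / of_nat M
                   - qtrace {0..<N} (qmult {0..<N} (extend_local N (Ks l) (OK l)) \<rho>))
          = \<bar>S / real M - mr l\<bar>"
    proof -
      have e: "complex_of_real S / complex_of_nat M - complex_of_real (mr l) = complex_of_real (S / real M - mr l)"
        by simp
      have "cmod (complex_of_real S / complex_of_nat M - complex_of_real (mr l)) = \<bar>S / real M - mr l\<bar>"
        by (simp only: e norm_of_real)
      thus ?thesis using \<open>(\<Sum>m<M. qtrace {0..<N} (qmult {0..<N} (extend_local N (Ks l) (OK l)) (sic_shadow \<psi> N (\<omega> m)))) = complex_of_real S\<close>
          muf[OF l] by simp
    qed
    hence gt: "\<bar>S / real M - mr l\<bar> > \<epsilon>" using c by simp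
    have negs: "(\<Sum>s\<in>?OS. p s * (- x l s)) = - mr l" unfolding mr_def by (simp add: sum_negf)
    have negS: "(\<Sum>m<M. - x l (\<omega> m)) = - S" unfolding S_def by (simp add: sum_negf)
    show ?thesis
    proof (cases "S / real M - mr l > \<epsilon>")
      case True
      hence "S / real M > mr l + \<epsilon>" by simp
      hence "S > real M * (mr l + \<epsilon>)" using Mpos by (simp add: field_simps)
      hence "U l \<omega>" unfolding U_def S_def by simp
      thus ?thesis using l by blast
    next
      case False
      hence "mr l - S / real M > \<epsilon>" using gt by (simp add: abs_if split: if_splits)
      hence "- S / real M > - mr l + \<epsilon>" by simp
      hence "- S > real M * (- mr l + \<epsilon>)" using Mpos by (simp add: field_simps)
      hence "D l \<omega>" unfolding D_def negs negS by simp
      thus ?thesis using l by blast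
    qed
  qed
  have P0: "P \<omega> \<ge> 0" if "\<omega> \<in> ?W" for \<omega>
    unfolding P_def p_def using that prob_nonneg[OF rho] by (intro prod_nonneg) auto
  have pt: "P \<omega> - (\<Sum>l<L. (if U l \<omega> then P \<omega> else 0) + (if D l \<omega> then P \<omega> else 0)) \<le> (if Ev \<omega> then P \<omega> else 0)"
    if w: "\<omega> \<in> ?W" for \<omega>
  proof (cases "Ev \<omega>")
    case True
    have "0 \<le> (\<Sum>l<L. (if U l \<omega> then P \<omega> else 0) + (if D l \<omega> then P \<omega> else 0))"
      using P0[OF w] by (intro sum_nonneg) auto
    thus ?thesis using True by simp
  next
    case False
    obtain l where l: "l < L" and ud: "U l \<omega> \<or> D l \<omega>" using bad[OF w False] by blast
    have "P \<omega> \<le> (if U l \<omega> then P \<omega> else 0) + (if D l \<omega> then P \<omega> else 0)"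
      using ud P0[OF w] by auto
    also have "\<dots> \<le> (\<Sum>l<L. (if U l \<omega> then P \<omega> else 0) + (if D l \<omega> then P \<omega> else 0))"
      by (rule member_le_sum) (use l P0[OF w] in auto)
    finally show ?thesis using False by simp
  qed
  have tot: "(\<Sum>\<omega>\<in>?W. P \<omega>) = 1"
    unfolding P_def p_def by (rule total_prob[OF finite_OS prob_sum[OF sic rho]])
  have finW: "finite ?W" by (simp add: finite_PiE finite_OS)
  have "1 - \<delta> \<le> 1 - (\<Sum>l<L. a l + a l)"
  proof -
    have "(\<Sum>l<L. a l + a l) \<le> (\<Sum>l<L. \<delta> / (2 * real L) + \<delta> / (2 * real L))"
    proof (rule sum_mono)
      fix l assume "l \<in> {..<L}"
      hence "a l \<le> \<delta> / (2 * real L)" using al by auto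
      thus "a l + a l \<le> \<delta> / (2 * real L) + \<delta> / (2 * real L)" by linarith
    qed
    also have "\<dots> = \<delta>" using L by (simp add: field_simps)
    finally show ?thesis by simp
  qed
  also have "\<dots> \<le> (\<Sum>\<omega>\<in>?W. P \<omega>) - (\<Sum>l<L. (\<Sum>\<omega>\<in>?W. if U l \<omega> then P \<omega> else 0) + (\<Sum>\<omega>\<in>?W. if D l \<omega> then P \<omega> else 0))"
  proof -
    have "(\<Sum>l<L. (\<Sum>\<omega>\<in>?W. if U l \<omega> then P \<omega> else 0) + (\<Sum>\<omega>\<in>?W. if D l \<omega> then P \<omega> else 0)) \<le> (\<Sum>l<L. a l + a l)"
    proof (rule sum_mono)
      fix l assume "l \<in> {..<L}"
      hence "l < L" by auto
      thus "(\<Sum>\<omega>\<in>?W. if U l \<omega> then P \<omega> else 0) + (\<Sum>\<omega>\<in>?W. if D l \<omega> then P \<omega> else 0) \<le> a l + a l"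
        using tU tD by (intro add_mono) auto
    qed
    thus ?thesis using tot by simp
  qed
  also have "\<dots> = (\<Sum>\<omega>\<in>?W. P \<omega> - (\<Sum>l<L. (if U l \<omega> then P \<omega> else 0) + (if D l \<omega> then P \<omega> else 0)))"
    by (simp add: sum_subtractf sum.distrib sum.swap[of _ "{..<L}"])
  also have "\<dots> \<le> (\<Sum>\<omega>\<in>?W. if Ev \<omega> then P \<omega> else 0)"
    by (rule sum_mono) (rule pt)
  also have "\<dots> = shadows_prob \<psi> N \<rho> M Ev"
    unfolding shadows_prob_def P_def p_def ..
  finally show ?thesis unfolding Ev_def .
qed


end
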